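(* Let $\mathcal{L}\subset\mathbb{S}^n$ be a regular hyperplane with non-zero ML degree. Then the ML degree of $\mathcal{L}$ equals the degree of the projection $$\gamma:\overline{\{(\Sigma,\Gamma,\ell)\in L^{-1}\times L^\perp\times\mathrm{Gr}(1,\mathbb{P}\mathbb{S}^n) \mid \Sigma\neq\Gamma,\ \Sigma\in\ell,\ \Gamma\in\ell\}}\to\mathcal{J},\quad (\Sigma,\Gamma,\ell)\mapsto\ell,$$ where $\mathcal{J}:=\overline{\{\ell\in\mathrm{Gr}(1,\mathbb{P}\mathbb{S}^n)\mid\exists(\Sigma,\Gamma)\in L^{-1}\times L^\perp:\Sigma\neq\Gamma,\ \Sigma\in\ell,\ \Gamma\in\ell\}}$.
   Context: $\mathbb{S}^n$ denotes the space of complex symmetric $n\times n$ matrices, $\mathbb{P}\mathbb{S}^n$ its projectivization, $\mathrm{Gr}(1,\mathbb{P}\mathbb{S}^n)$ the Grassmannian of lines. A linear subspace $\mathcal{L}$ is regular if it contains a full-rank matrix. $\mathcal{L}^\perp=\{\Sigma:\mathrm{tr}(K\Sigma)=0\ \forall K\in\mathcal{L}\}$. The reciprocal variety $\mathcal{L}^{-1}$ is the Zariski closure of the set of inverses of invertible matrices in $\mathcal{L}$. The ML degree of $\mathcal{L}$ is the number of matrices in $\mathcal{L}^{-1}\cap(\mathcal{L}^\perp+S)$ for generic $S\in\mathbb{S}^n$. $L^{-1},L^\perp$ are the projectivizations. *)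

theory Defs
  imports "HOL-Analysis.Analysis"
begin

type_synonym 'n cmat = "complex^'n^'n"

inductive_set polyfuns :: "('x \<Rightarrow> complex) set \<Rightarrow> ('x \<Rightarrow> complex) set"
  for coords :: "('x \<Rightarrow> complex) set" where
  pf_const: "(\<lambda>_. c) \<in> polyfuns coords"
| pf_coord: "f \<in> coords \<Longrightarrow> f \<in> polyfuns coords"
| pf_add: "f \<in> polyfuns coords \<Longrightarrow> g \<in> polyfuns coords \<Longrightarrow> (\<lambda>x. f x + g x) \<in> polyfuns coords"
| pf_mult: "f \<in> polyfuns coords \<Longrightarrow> g \<in> polyfuns coords \<Longrightarrow> (\<lambda>x. f x * g x) \<in> polyfuns coords"

definition zclosed :: "('x \<Rightarrow> complex) set \<Rightarrow> 'x set \<Rightarrow> bool" where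
  "zclosed coords C \<longleftrightarrow> (\<exists>F \<subseteq> polyfuns coords. C = {x. \<forall>f\<in>F. f x = 0})"

definition zclosure :: "('x \<Rightarrow> complex) set \<Rightarrow> 'x set \<Rightarrow> 'x set \<Rightarrow> 'x set" where
  "zclosure coords Y A = Y \<inter> \<Inter>{C. zclosed coords C \<and> A \<subseteq> C}"

definition zopen_in :: "('x \<Rightarrow> complex) set \<Rightarrow> 'x set \<Rightarrow> 'x set \<Rightarrow> bool" where
  "zopen_in coords Y U \<longleftrightarrow> (\<exists>C. zclosed coords C \<and> U = Y - C)"

definition mcoords :: "(('n::finite) cmat \<Rightarrow> complex) set" where
  "mcoords = {\<lambda>A. A $ i $ j | i j. True}"

definition pcoords :: "((('n::finite) cmat \<times> ('n::finite) cmat) \<Rightarrow> complex) set" where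
  "pcoords = {\<lambda>(u,v). u $ i $ j | i j. True} \<union> {\<lambda>(u,v). v $ i $ j | i j. True}"

definition tcoords :: "((('n::finite) cmat \<times> ('n::finite) cmat \<times> (('n::finite) cmat \<times> ('n::finite) cmat)) \<Rightarrow> complex) set" where
  "tcoords = {\<lambda>(a,b,u,v). a $ i $ j | i j. True} \<union> {\<lambda>(a,b,u,v). b $ i $ j | i j. True}
           \<union> {\<lambda>(a,b,u,v). u $ i $ j | i j. True} \<union> {\<lambda>(a,b,u,v). v $ i $ j | i j. True}"

definition csc :: "complex \<Rightarrow> ('n::finite) cmat \<Rightarrow> ('n::finite) cmat" where
  "csc c A = (\<chi> i j. c * A $ i $ j)"

definition Sym :: "('n::finite) cmat set" where
  "Sym = {A. transpose A = A}"

definition is_hyperplane :: "('n::finite) cmat set \<Rightarrow> bool" where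
  "is_hyperplane L \<longleftrightarrow> (\<exists>\<phi> :: ('n::finite) cmat \<Rightarrow> complex.
      (\<forall>A\<in>Sym. \<forall>B\<in>Sym. \<phi> (A + B) = \<phi> A + \<phi> B) \<and>
      (\<forall>c. \<forall>A\<in>Sym. \<phi> (csc c A) = c * \<phi> A) \<and>
      (\<exists>A\<in>Sym. \<phi> A \<noteq> 0) \<and>
      L = {K\<in>Sym. \<phi> K = 0})"

definition regular :: "('n::finite) cmat set \<Rightarrow> bool" where
  "regular L \<longleftrightarrow> (\<exists>K\<in>L. det K \<noteq> 0)"

definition perp :: "('n::finite) cmat set \<Rightarrow> ('n::finite) cmat set" where
  "perp L = {S\<in>Sym. \<forall>K\<in>L. trace (K ** S) = 0}"

definition reciprocal :: "('n::finite) cmat set \<Rightarrow> ('n::finite) cmat set" where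
  "reciprocal L = zclosure mcoords Sym {matrix_inv K | K. K \<in> L \<and> invertible K}"

definition ml_degree :: "('n::finite) cmat set \<Rightarrow> nat \<Rightarrow> bool" where
  "ml_degree L d \<longleftrightarrow> (\<exists>U. zopen_in mcoords Sym U \<and> U \<noteq> {} \<and>
     (\<forall>S\<in>U. finite (reciprocal L \<inter> {G + S | G. G \<in> perp L}) \<and>
             card (reciprocal L \<inter> {G + S | G. G \<in> perp L}) = d))"

text \<open>Point of P S^n represented by a non-zero A: the complex line through A.\<close>
definition ppoint :: "('n::finite) cmat \<Rightarrow> ('n::finite) cmat set" where
  "ppoint A = {csc c A | c. True}"

definition indep2 :: "('n::finite) cmat \<Rightarrow> ('n::finite) cmat \<Rightarrow> bool" where
  "indep2 u v \<longleftrightarrow> (\<forall>a b. csc a u + csc b v = 0 \<longrightarrow> a = 0 \<and> b = 0)"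

text \<open>Representatives of points of Gr(1, P S^n): independent pairs of symmetric matrices.\<close>
definition IndepPairs :: "(('n::finite) cmat \<times> ('n::finite) cmat) set" where
  "IndepPairs = {(u,v). u \<in> Sym \<and> v \<in> Sym \<and> indep2 u v}"

definition on_line :: "('n::finite) cmat \<Rightarrow> ('n::finite) cmat \<times> ('n::finite) cmat \<Rightarrow> bool" where
  "on_line A l \<longleftrightarrow> (\<exists>a b. A = csc a (fst l) + csc b (snd l))"

definition Amb3 :: "(('n::finite) cmat \<times> ('n::finite) cmat \<times> (('n::finite) cmat \<times> ('n::finite) cmat)) set" where
  "Amb3 = {(S,G,l). S \<in> Sym - {0} \<and> G \<in> Sym - {0} \<and> l \<in> IndepPairs}"

definition incidence0 :: "('n::finite) cmat set \<Rightarrow> (('n::finite) cmat \<times> ('n::finite) cmat \<times> (('n::finite) cmat \<times> ('n::finite) cmat)) set" where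
  "incidence0 L = {(S,G,l). S \<in> reciprocal L - {0} \<and> G \<in> perp L - {0} \<and> l \<in> IndepPairs \<and>
                    ppoint S \<noteq> ppoint G \<and> on_line S l \<and> on_line G l}"

text \<open>The closed incidence variety (domain of gamma), lifted to representatives.\<close>
definition incidence :: "('n::finite) cmat set \<Rightarrow> (('n::finite) cmat \<times> ('n::finite) cmat \<times> (('n::finite) cmat \<times> ('n::finite) cmat)) set" where
  "incidence L = zclosure tcoords Amb3 (incidence0 L)"

text \<open>The variety J, lifted to representatives.\<close>
definition Jvar :: "('n::finite) cmat set \<Rightarrow> (('n::finite) cmat \<times> ('n::finite) cmat) set" where
  "Jvar L = zclosure pcoords IndepPairs {l. \<exists>S G. (S,G,l) \<in> incidence0 L}"

text \<open>Fibre of gamma over the line l, as a set of pairs of projective points.\<close>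
definition gamma_fibre :: "('n::finite) cmat set \<Rightarrow> ('n::finite) cmat \<times> ('n::finite) cmat \<Rightarrow> (('n::finite) cmat set \<times> ('n::finite) cmat set) set" where
  "gamma_fibre L l = {(ppoint S, ppoint G) | S G. (S,G,l) \<in> incidence L}"

definition gamma_degree :: "('n::finite) cmat set \<Rightarrow> nat \<Rightarrow> bool" where
  "gamma_degree L d \<longleftrightarrow> (\<exists>U. zopen_in pcoords (Jvar L) U \<and>
      zclosure pcoords IndepPairs U = Jvar L \<and>
      (\<forall>l\<in>U. finite (gamma_fibre L l) \<and> card (gamma_fibre L l) = d))"

end

theory Submission
  imports Defs
begin

lemma pf_const': "(\<lambda>_. c) \<in> polyfuns C" by (rule pf_const)

lemma pf_sum:
  assumes "finite A" "\<And>i. i \<in> A \<Longrightarrow> g i \<in> polyfuns C"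
  shows "(\<lambda>x. \<Sum>i\<in>A. g i x) \<in> polyfuns C"
  using assms
proof (induction A rule: finite_induct)
  case empty then show ?case by (simp add: pf_const)
next
  case (insert a A)
  then show ?case by (simp add: pf_add)
qed

lemma pf_pow: "g \<in> polyfuns C \<Longrightarrow> (\<lambda>x. g x ^ n) \<in> polyfuns C"
proof (induction n)
  case 0 then show ?case by (simp add: pf_const)
next
  case (Suc n) then show ?case using pf_mult[OF Suc.prems Suc.IH[OF Suc.prems]] by simp
qed

lemma pf_neg: "g \<in> polyfuns C \<Longrightarrow> (\<lambda>x. - g x) \<in> polyfuns C"
  using pf_mult[OF pf_const[of "-1"], of g] by simp

lemma pf_diff: "f \<in> polyfuns C \<Longrightarrow> g \<in> polyfuns C \<Longrightarrow> (\<lambda>x. f x - g x) \<in> polyfuns C"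
  using pf_add[OF _ pf_neg[of g]] by simp

lemma pf_comp:
  assumes "f \<in> polyfuns C1" "\<And>c. c \<in> C1 \<Longrightarrow> (\<lambda>x. c (h x)) \<in> polyfuns C2"
  shows "(\<lambda>x. f (h x)) \<in> polyfuns C2"
  using assms(1)
proof (induction rule: polyfuns.induct)
  case (pf_const c) then show ?case by (rule polyfuns.pf_const)
next
  case (pf_coord f) then show ?case using assms(2) by blast
next
  case (pf_add f g) then show ?case using polyfuns.pf_add by blast
next
  case (pf_mult f g) then show ?case using polyfuns.pf_mult by blast
qed

lemma zclosed_V: "F \<subseteq> polyfuns C \<Longrightarrow> zclosed C {x. \<forall>f\<in>F. f x = 0}"
  unfolding zclosed_def by blast

lemma zclosure_char:
  "zclosure C Y A = {x\<in>Y. \<forall>p\<in>polyfuns C. (\<forall>a\<in>A. p a = 0) \<longrightarrow> p x = 0}"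
proof (intro equalityI subsetI)
  fix x assume x: "x \<in> zclosure C Y A"
  show "x \<in> {x\<in>Y. \<forall>p\<in>polyfuns C. (\<forall>a\<in>A. p a = 0) \<longrightarrow> p x = 0}"
  proof (safe)
    show "x \<in> Y" using x by (simp add: zclosure_def)
    fix p assume p: "p \<in> polyfuns C" "\<forall>a\<in>A. p a = 0"
    have "zclosed C {x. \<forall>f\<in>{p}. f x = 0}" using p by (intro zclosed_V) auto
    moreover have "A \<subseteq> {x. \<forall>f\<in>{p}. f x = 0}" using p by auto
    ultimately show "p x = 0" using x unfolding zclosure_def by blast
  qed
next
  fix x assume x: "x \<in> {x\<in>Y. \<forall>p\<in>polyfuns C. (\<forall>a\<in>A. p a = 0) \<longrightarrow> p x = 0}"
  show "x \<in> zclosure C Y A"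
    unfolding zclosure_def
  proof (safe)
    show "x \<in> Y" using x by simp
    fix D assume D: "zclosed C D" "A \<subseteq> D"
    then obtain F where F: "F \<subseteq> polyfuns C" "D = {x. \<forall>f\<in>F. f x = 0}" unfolding zclosed_def by blast
    show "x \<in> D" using x D F by blast
  qed
qed

lemma zclosure_sub: "A \<subseteq> Y \<Longrightarrow> A \<subseteq> zclosure C Y A"
  unfolding zclosure_char by blast

lemma zclosure_vanish:
  "x \<in> zclosure C Y A \<Longrightarrow> p \<in> polyfuns C \<Longrightarrow> (\<And>a. a \<in> A \<Longrightarrow> p a = 0) \<Longrightarrow> p x = 0"
  unfolding zclosure_char by blast

lemma zclosure_in: "x \<in> zclosure C Y A \<Longrightarrow> x \<in> Y"
  unfolding zclosure_def by blast

section \<open>Restriction to curves, domain property\<close>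

lemma pf_linepoly:
  assumes "f \<in> polyfuns C" "\<And>c. c \<in> C \<Longrightarrow> \<exists>P. \<forall>z. c (h z) = poly P z"
  shows "\<exists>P. \<forall>z. f (h z) = poly P z"
  using assms(1)
proof (induction rule: polyfuns.induct)
  case (pf_const c) then show ?case by (intro exI[of _ "[:c:]"]) simp
next
  case (pf_coord f) then show ?case using assms(2) by blast
next
  case (pf_add f g)
  then obtain P Q where "\<forall>z. f (h z) = poly P z" "\<forall>z. g (h z) = poly Q z" by blast
  then show ?case by (intro exI[of _ "P + Q"]) simp
next
  case (pf_mult f g)
  then obtain P Q where "\<forall>z. f (h z) = poly P z" "\<forall>z. g (h z) = poly Q z" by blast
  then show ?case by (intro exI[of _ "P * Q"]) simp
qed

lemma poly_nonzero_somewhere: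
  fixes P :: "complex poly"
  assumes "P \<noteq> 0" shows "\<exists>z. poly P z \<noteq> 0"
proof (rule ccontr)
  assume "\<not> ?thesis"
  then have "{x. poly P x = 0} = UNIV" by auto
  with poly_roots_finite[OF assms] show False by (simp add: infinite_UNIV_char_0)
qed

lemma domain_lemma:
  fixes f g :: "'x \<Rightarrow> complex" and h :: "complex \<Rightarrow> 'x"
  assumes "\<exists>P. \<forall>z. f (h z) = poly P z" "\<exists>Q. \<forall>z. g (h z) = poly Q z"
    and "f (h a) \<noteq> 0" "g (h b) \<noteq> 0"
  shows "\<exists>z. f (h z) * g (h z) \<noteq> 0"
proof -
  obtain P Q where P: "\<forall>z. f (h z) = poly P z" and Q: "\<forall>z. g (h z) = poly Q z" using assms by blast
  have "P \<noteq> 0" using P assms(3) by auto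
  moreover have "Q \<noteq> 0" using Q assms(4) by auto
  ultimately have "P * Q \<noteq> 0" by simp
  then obtain z where "poly (P * Q) z \<noteq> 0" using poly_nonzero_somewhere by blast
  then show ?thesis using P Q by auto
qed

section \<open>Expansion with uniform coefficients\<close>

lemma pf_expand:
  fixes Ln :: "'x \<Rightarrow> complex \<Rightarrow> 'y"
  assumes "f \<in> polyfuns C'"
    and "\<And>c. c \<in> C' \<Longrightarrow> \<exists>a b. a \<in> polyfuns C \<and> b \<in> polyfuns C \<and> (\<forall>x s. c (Ln x s) = a x + b x * s)"
  shows "\<exists>D q. (\<forall>k. q k \<in> polyfuns C) \<and> (\<forall>k x. D < k \<longrightarrow> q k x = 0) \<and>
     (\<forall>x. \<exists>P. (\<forall>k. coeff P k = q k x) \<and> (\<forall>s. f (Ln x s) = poly P s))"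
  using assms(1)
proof (induction rule: polyfuns.induct)
  case (pf_const c)
  show ?case
    by (rule exI[of _ 0], rule exI[of _ "\<lambda>k x. if k = 0 then c else 0"])
       (auto intro: polyfuns.pf_const intro!: exI[of _ "[:c:]"] simp: coeff_pCons split: nat.split)
next
  case (pf_coord c)
  then obtain a b where ab: "a \<in> polyfuns C" "b \<in> polyfuns C" "\<forall>x s. c (Ln x s) = a x + b x * s"
    using assms(2) by blast
  show ?case
  proof (rule exI[of _ 1], rule exI[of _ "\<lambda>k x. if k = 0 then a x else if k = 1 then b x else 0"], intro conjI allI impI)
    fix k show "(\<lambda>x. if k = 0 then a x else if k = 1 then b x else 0) \<in> polyfuns C"
      using ab by (cases "k = 0"; cases "k = 1") (auto intro: polyfuns.pf_const)
  next
    fix k x assume "1 < (k::nat)" then show "(if k = 0 then a x else if k = 1 then b x else 0) = 0" by auto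
  next
    fix x show "\<exists>P. (\<forall>k. coeff P k = (if k = 0 then a x else if k = 1 then b x else 0)) \<and> (\<forall>s. c (Ln x s) = poly P s)"
      by (rule exI[of _ "[:a x, b x:]"]) (auto simp: ab coeff_pCons split: nat.split)
  qed
next
  case (pf_add f g)
  then obtain D1 q1 D2 q2 where
    1: "\<forall>k. q1 k \<in> polyfuns C" "\<forall>k x. D1 < k \<longrightarrow> q1 k x = 0"
       "\<forall>x. \<exists>P. (\<forall>k. coeff P k = q1 k x) \<and> (\<forall>s. f (Ln x s) = poly P s)" and
    2: "\<forall>k. q2 k \<in> polyfuns C" "\<forall>k x. D2 < k \<longrightarrow> q2 k x = 0"
       "\<forall>x. \<exists>P. (\<forall>k. coeff P k = q2 k x) \<and> (\<forall>s. g (Ln x s) = poly P s)" by blast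
  show ?case
  proof (rule exI[of _ "max D1 D2"], rule exI[of _ "\<lambda>k x. q1 k x + q2 k x"], intro conjI allI impI)
    fix k show "(\<lambda>x. q1 k x + q2 k x) \<in> polyfuns C" using 1 2 by (simp add: polyfuns.pf_add)
  next
    fix k x assume "max D1 D2 < k" then show "q1 k x + q2 k x = 0" using 1 2 by simp
  next
    fix x
    obtain P where P: "\<forall>k. coeff P k = q1 k x" "\<forall>s. f (Ln x s) = poly P s" using 1 by blast
    obtain Q where Q: "\<forall>k. coeff Q k = q2 k x" "\<forall>s. g (Ln x s) = poly Q s" using 2 by blast
    show "\<exists>P. (\<forall>k. coeff P k = q1 k x + q2 k x) \<and> (\<forall>s. f (Ln x s) + g (Ln x s) = poly P s)"
      by (rule exI[of _ "P + Q"]) (simp add: P Q)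
  qed
next
  case (pf_mult f g)
  then obtain D1 q1 D2 q2 where
    1: "\<forall>k. q1 k \<in> polyfuns C" "\<forall>k x. D1 < k \<longrightarrow> q1 k x = 0"
       "\<forall>x. \<exists>P. (\<forall>k. coeff P k = q1 k x) \<and> (\<forall>s. f (Ln x s) = poly P s)" and
    2: "\<forall>k. q2 k \<in> polyfuns C" "\<forall>k x. D2 < k \<longrightarrow> q2 k x = 0"
       "\<forall>x. \<exists>P. (\<forall>k. coeff P k = q2 k x) \<and> (\<forall>s. g (Ln x s) = poly P s)" by blast
  show ?case
  proof (rule exI[of _ "D1 + D2"], rule exI[of _ "\<lambda>k x. \<Sum>i\<le>k. q1 i x * q2 (k - i) x"], intro conjI allI impI)
    fix k show "(\<lambda>x. \<Sum>i\<le>k. q1 i x * q2 (k - i) x) \<in> polyfuns C"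
      using 1 2 by (intro pf_sum) (auto intro: polyfuns.pf_mult)
  next
    fix k x assume k: "D1 + D2 < k"
    have "q1 i x * q2 (k - i) x = 0" for i
      using 1(2) 2(2) k by (cases "D1 < i") auto
    then show "(\<Sum>i\<le>k. q1 i x * q2 (k - i) x) = 0" by (intro sum.neutral) auto
  next
    fix x
    obtain P where P: "\<forall>k. coeff P k = q1 k x" "\<forall>s. f (Ln x s) = poly P s" using 1 by blast
    obtain Q where Q: "\<forall>k. coeff Q k = q2 k x" "\<forall>s. g (Ln x s) = poly Q s" using 2 by blast
    show "\<exists>P. (\<forall>k. coeff P k = (\<Sum>i\<le>k. q1 i x * q2 (k - i) x)) \<and> (\<forall>s. f (Ln x s) * g (Ln x s) = poly P s)"
      by (rule exI[of _ "P * Q"]) (simp add: P Q coeff_mult)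
  qed
qed

lemma poly_sum_bound:
  fixes P :: "complex poly"
  assumes "\<forall>k. D < k \<longrightarrow> coeff P k = 0"
  shows "poly P s = (\<Sum>k\<le>D. coeff P k * s ^ k)"
proof -
  have dg: "degree P \<le> D" using assms by (meson degree_le)
  have "poly P s = (\<Sum>k\<le>degree P. coeff P k * s ^ k)" by (rule poly_altdef)
  also have "\<dots> = (\<Sum>k\<le>D. coeff P k * s ^ k)"
    using dg by (intro sum.mono_neutral_left) (auto simp: coeff_eq_0)
  finally show ?thesis .
qed

lemma pf_expand_sum:
  fixes Ln :: "'x \<Rightarrow> complex \<Rightarrow> 'y"
  assumes "f \<in> polyfuns C'"
    and "\<And>c. c \<in> C' \<Longrightarrow> \<exists>a b. a \<in> polyfuns C \<and> b \<in> polyfuns C \<and> (\<forall>x s. c (Ln x s) = a x + b x * s)"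
  shows "\<exists>D q. (\<forall>k. q k \<in> polyfuns C) \<and> (\<forall>k x. D < k \<longrightarrow> q k x = 0) \<and>
     (\<forall>x s. f (Ln x s) = (\<Sum>k\<le>D. q k x * s ^ k))"
proof -
  obtain D q where q: "\<forall>k. q k \<in> polyfuns C" "\<forall>k x. D < k \<longrightarrow> q k x = 0"
     "\<forall>x. \<exists>P. (\<forall>k. coeff P k = q k x) \<and> (\<forall>s. f (Ln x s) = poly P s)"
    using pf_expand[of f C' C Ln, OF assms(1) assms(2)] by blast
  have "f (Ln x s) = (\<Sum>k\<le>D. q k x * s ^ k)" for x s
  proof -
    obtain P where P: "\<forall>k. coeff P k = q k x" "\<forall>s. f (Ln x s) = poly P s" using q(3) by blast
    show ?thesis using poly_sum_bound[of D P s] P q(2) by simp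
  qed
  then show ?thesis using q(1,2) by blast
qed

lemma csc_entry [simp]: "csc c A $ i $ j = c * A $ i $ j"
  by (simp add: csc_def)

lemma csc_1 [simp]: "csc 1 A = A" by (simp add: vec_eq_iff)
lemma csc_0 [simp]: "csc 0 A = 0" by (simp add: vec_eq_iff)
lemma csc_zero [simp]: "csc c 0 = 0" by (simp add: vec_eq_iff)
lemma csc_csc [simp]: "csc a (csc b A) = csc (a * b) A" by (simp add: vec_eq_iff)
lemma csc_add: "csc a (A + B) = csc a A + csc a B" by (simp add: vec_eq_iff algebra_simps)
lemma csc_add2: "csc (a + b) A = csc a A + csc b A" by (simp add: vec_eq_iff algebra_simps)

lemma mat_eq_iff: "(A :: 'n::finite cmat) = B \<longleftrightarrow> (\<forall>i j. A $ i $ j = B $ i $ j)"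
  by (simp add: vec_eq_iff)

lemma Sym_iff: "A \<in> Sym \<longleftrightarrow> (\<forall>i j. A $ i $ j = A $ j $ i)"
  by (auto simp: Sym_def transpose_def vec_eq_iff)

lemma Sym_add: "A \<in> Sym \<Longrightarrow> B \<in> Sym \<Longrightarrow> A + B \<in> Sym" by (simp add: Sym_iff)
lemma Sym_diff: "A \<in> Sym \<Longrightarrow> B \<in> Sym \<Longrightarrow> A - B \<in> Sym" by (simp add: Sym_iff)
lemma Sym_csc: "A \<in> Sym \<Longrightarrow> csc c A \<in> Sym" by (simp add: Sym_iff)
lemma Sym_0: "0 \<in> Sym" by (simp add: Sym_iff)
lemma Sym_sum: "finite S \<Longrightarrow> (\<And>i. i \<in> S \<Longrightarrow> X i \<in> Sym) \<Longrightarrow> (\<Sum>i\<in>S. X i) \<in> Sym"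
  by (induction S rule: finite_induct) (auto simp: Sym_0 Sym_add)

lemma mcoord: "(\<lambda>A. A $ i $ j) \<in> polyfuns mcoords"
  by (rule pf_coord) (auto simp: mcoords_def)

lemma pcoord1: "(\<lambda>l. fst l $ i $ j) \<in> polyfuns pcoords"
proof -
  have "(\<lambda>(u,v). u $ i $ j) \<in> polyfuns pcoords" by (rule pf_coord) (auto simp: pcoords_def)
  moreover have "(\<lambda>(u::'a cmat,v::'a cmat). u $ i $ j) = (\<lambda>l. fst l $ i $ j)" by auto
  ultimately show ?thesis by simp
qed

lemma pcoord2: "(\<lambda>l. snd l $ i $ j) \<in> polyfuns pcoords"
proof -
  have "(\<lambda>(u,v). v $ i $ j) \<in> polyfuns pcoords" by (rule pf_coord) (auto simp: pcoords_def)
  moreover have "(\<lambda>(u::'a cmat,v::'a cmat). v $ i $ j) = (\<lambda>l. snd l $ i $ j)" by auto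
  ultimately show ?thesis by simp
qed

lemma tcoord1: "(\<lambda>t. fst t $ i $ j) \<in> polyfuns tcoords"
proof -
  have "(\<lambda>(a,b,u,v). a $ i $ j) \<in> polyfuns tcoords" by (rule pf_coord) (auto simp: tcoords_def)
  moreover have "(\<lambda>(a::'a cmat,b::'a cmat,u::'a cmat,v::'a cmat). a $ i $ j) = (\<lambda>t. fst t $ i $ j)" by auto
  ultimately show ?thesis by simp
qed

lemma tcoord2: "(\<lambda>t. fst (snd t) $ i $ j) \<in> polyfuns tcoords"
proof -
  have "(\<lambda>(a,b,u,v). b $ i $ j) \<in> polyfuns tcoords" by (rule pf_coord) (auto simp: tcoords_def)
  moreover have "(\<lambda>(a::'a cmat,b::'a cmat,u::'a cmat,v::'a cmat). b $ i $ j) = (\<lambda>t. fst (snd t) $ i $ j)" by auto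
  ultimately show ?thesis by simp
qed

lemma tcoord3: "(\<lambda>t. fst (snd (snd t)) $ i $ j) \<in> polyfuns tcoords"
proof -
  have "(\<lambda>(a,b,u,v). u $ i $ j) \<in> polyfuns tcoords" by (rule pf_coord) (auto simp: tcoords_def)
  moreover have "(\<lambda>(a::'a cmat,b::'a cmat,u::'a cmat,v::'a cmat). u $ i $ j) = (\<lambda>t. fst (snd (snd t)) $ i $ j)" by auto
  ultimately show ?thesis by simp
qed

lemma tcoord4: "(\<lambda>t. snd (snd (snd t)) $ i $ j) \<in> polyfuns tcoords"
proof -
  have "(\<lambda>(a,b,u,v). v $ i $ j) \<in> polyfuns tcoords" by (rule pf_coord) (auto simp: tcoords_def)
  moreover have "(\<lambda>(a::'a cmat,b::'a cmat,u::'a cmat,v::'a cmat). v $ i $ j) = (\<lambda>t. snd (snd (snd t)) $ i $ j)" by auto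
  ultimately show ?thesis by simp
qed

lemma pf_comp_m:
  assumes "f \<in> polyfuns (mcoords :: ('n::finite cmat \<Rightarrow> complex) set)"
    and "\<And>i j. (\<lambda>x. h x $ i $ j) \<in> polyfuns C2"
  shows "(\<lambda>x. f (h x)) \<in> polyfuns C2"
  using assms(1) by (rule pf_comp) (auto simp: mcoords_def assms(2))

section \<open>Linear algebra: the orthogonal complement of a hyperplane\<close>

definition tr2 :: "'n::finite cmat \<Rightarrow> 'n cmat \<Rightarrow> complex" where
  "tr2 K S = (\<Sum>i\<in>UNIV. \<Sum>j\<in>UNIV. K $ i $ j * S $ j $ i)"

lemma trace_tr2: "trace (K ** S) = tr2 K S"
  by (simp add: trace_def matrix_matrix_mult_def tr2_def)

definition Bm :: "'n::finite \<Rightarrow> 'n \<Rightarrow> 'n cmat" where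
  "Bm i j = (\<chi> a b. if (a = i \<and> b = j) \<or> (a = j \<and> b = i) then 1 else 0)"

definition wt :: "'n \<Rightarrow> 'n \<Rightarrow> complex" where
  "wt i j = (if i = j then 1 else 1/2)"

lemma indicator_dsum:
  fixes t :: "'n::finite \<Rightarrow> 'n \<Rightarrow> complex"
  shows "(\<Sum>i\<in>UNIV. \<Sum>j\<in>UNIV. if (a = i \<and> b = j) \<or> (a = j \<and> b = i) then t i j else 0)
       = t a b + (if a \<noteq> b then t b a else 0)"
proof -
  have inner: "(\<Sum>j\<in>UNIV. if (a = i \<and> b = j) \<or> (a = j \<and> b = i) then t i j else 0)
     = (if i = a then t a b else 0) + (if i = b \<and> a \<noteq> b then t b a else 0)" for i
    by (cases "i = a"; cases "i = b") (auto simp: if_distrib cong: if_cong)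
  show ?thesis by (simp add: inner sum.distrib)
qed

lemma Bm_Sym: "Bm i j \<in> Sym" by (auto simp: Sym_iff Bm_def)
lemma Bm_sym: "Bm i j = Bm j i" by (auto simp: Bm_def vec_eq_iff)

lemma Sym_decomp:
  assumes "K \<in> Sym"
  shows "K = (\<Sum>i\<in>UNIV. \<Sum>j\<in>UNIV. csc (K $ i $ j * wt i j) (Bm i j))"
proof -
  have "(\<Sum>i\<in>UNIV. \<Sum>j\<in>UNIV. csc (K $ i $ j * wt i j) (Bm i j)) $ a $ b = K $ a $ b" for a b
  proof -
    have "(\<Sum>i\<in>UNIV. \<Sum>j\<in>UNIV. csc (K $ i $ j * wt i j) (Bm i j)) $ a $ b
       = (\<Sum>i\<in>UNIV. \<Sum>j\<in>UNIV. if (a = i \<and> b = j) \<or> (a = j \<and> b = i) then K $ i $ j * wt i j else 0)"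
      by (simp add: Bm_def if_distrib cong: if_cong)
    also have "\<dots> = K $ a $ b" using assms
      by (subst indicator_dsum) (auto simp: wt_def Sym_iff)
    finally show ?thesis .
  qed
  then show ?thesis by (simp add: vec_eq_iff)
qed

lemma tr2_csc_right: "tr2 K (csc c S) = c * tr2 K S"
  by (simp add: tr2_def sum_distrib_left algebra_simps)
lemma tr2_csc_left: "tr2 (csc c K) S = c * tr2 K S"
  by (simp add: tr2_def sum_distrib_left algebra_simps)
lemma tr2_diff_left: "tr2 (K - K') S = tr2 K S - tr2 K' S"
  by (simp add: tr2_def sum_subtractf algebra_simps)
lemma tr2_diff_right: "tr2 K (S - S') = tr2 K S - tr2 K S'"
  by (simp add: tr2_def sum_subtractf algebra_simps)

lemma tr2_Bm: "tr2 (Bm a b) Y = Y $ b $ a + (if a \<noteq> b then Y $ a $ b else 0)"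
proof -
  have "tr2 (Bm a b) Y = (\<Sum>i\<in>UNIV. \<Sum>j\<in>UNIV. if (a = i \<and> b = j) \<or> (a = j \<and> b = i) then Y $ j $ i else 0)"
    unfolding tr2_def Bm_def by (intro sum.cong refl) auto
  also have "\<dots> = Y $ b $ a + (if a \<noteq> b then Y $ a $ b else 0)"
    by (subst indicator_dsum) simp
  finally show ?thesis .
qed

lemma hyperplane_Gamma:
  fixes L :: "'n::finite cmat set"
  assumes "is_hyperplane L"
  shows "\<exists>\<Gamma>. \<Gamma> \<in> Sym \<and> \<Gamma> \<noteq> 0 \<and> L = {K\<in>Sym. tr2 K \<Gamma> = 0} \<and> perp L = {csc c \<Gamma> | c. True}"
proof -
  obtain \<phi> :: "'n cmat \<Rightarrow> complex" where
    add: "\<forall>A\<in>Sym. \<forall>B\<in>Sym. \<phi> (A + B) = \<phi> A + \<phi> B" and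
    sc: "\<forall>c. \<forall>A\<in>Sym. \<phi> (csc c A) = c * \<phi> A" and
    nz: "\<exists>A\<in>Sym. \<phi> A \<noteq> 0" and
    Ldef: "L = {K\<in>Sym. \<phi> K = 0}"
    using assms unfolding is_hyperplane_def by blast
  have phi0: "\<phi> 0 = 0" using sc Sym_0 by (metis csc_0 mult_zero_left)
  have phisum: "\<phi> (\<Sum>i\<in>S. X i) = (\<Sum>i\<in>S. \<phi> (X i))" if "finite S" "\<And>i. i \<in> S \<Longrightarrow> X i \<in> Sym" for S X
    using that
  proof (induction S rule: finite_induct)
    case empty then show ?case by (simp add: phi0)
  next
    case (insert a S)
    have "(\<Sum>i\<in>S. X i) \<in> Sym" using insert by (intro Sym_sum) auto
    then show ?case using insert add by simp
  qed
  define \<Gamma> :: "'n cmat" where "\<Gamma> = (\<chi> i j. wt i j * \<phi> (Bm i j))"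
  have GSym: "\<Gamma> \<in> Sym" by (auto simp: Sym_iff \<Gamma>_def wt_def Bm_sym)
  have phiK: "\<phi> K = tr2 K \<Gamma>" if K: "K \<in> Sym" for K
  proof -
    have "\<phi> K = \<phi> (\<Sum>i\<in>UNIV. \<Sum>j\<in>UNIV. csc (K $ i $ j * wt i j) (Bm i j))"
      using Sym_decomp[OF K] by simp
    also have "\<dots> = (\<Sum>i\<in>UNIV. \<Sum>j\<in>UNIV. K $ i $ j * wt i j * \<phi> (Bm i j))"
      by (simp add: phisum Sym_sum Sym_csc Bm_Sym sc)
    also have "\<dots> = tr2 K \<Gamma>"
      unfolding tr2_def \<Gamma>_def by (intro sum.cong refl) (auto simp: wt_def Bm_sym[of _ _])
    finally show ?thesis .
  qed
  have Lchar: "L = {K\<in>Sym. tr2 K \<Gamma> = 0}" using Ldef phiK by auto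
  have Gnz: "\<Gamma> \<noteq> 0"
  proof
    assume "\<Gamma> = 0"
    then have "\<forall>A\<in>Sym. \<phi> A = 0" using phiK by (simp add: tr2_def)
    then show False using nz by blast
  qed
  obtain A0 where A0: "A0 \<in> Sym" "\<phi> A0 \<noteq> 0" using nz by blast
  have "perp L = {csc c \<Gamma> | c. True}"
  proof (intro equalityI subsetI)
    fix S assume "S \<in> {csc c \<Gamma> | c. True}"
    then obtain c where S: "S = csc c \<Gamma>" by blast
    show "S \<in> perp L" unfolding perp_def
      using S GSym Lchar by (auto simp: Sym_csc trace_tr2 tr2_csc_right)
  next
    fix S assume S: "S \<in> perp L"
    then have SSym: "S \<in> Sym" and Sp: "\<forall>K\<in>L. tr2 K S = 0" by (auto simp: perp_def trace_tr2)
    define c where "c = tr2 A0 S / \<phi> A0"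
    have key: "tr2 K S = c * tr2 K \<Gamma>" if K: "K \<in> Sym" for K
    proof -
      define t where "t = \<phi> K / \<phi> A0"
      have K'Sym: "K - csc t A0 \<in> Sym" using K A0 by (simp add: Sym_diff Sym_csc)
      have "K - csc t A0 = K + csc (-t) A0" by (simp add: mat_eq_iff)
      then have "\<phi> (K - csc t A0) = \<phi> (K + csc (-t) A0)" by (rule arg_cong)
      also have "\<dots> = \<phi> K + \<phi> (csc (-t) A0)" using add K A0 Sym_csc by blast
      also have "\<dots> = \<phi> K - t * \<phi> A0" using sc A0 by simp
      also have "\<dots> = 0" using A0 by (simp add: t_def)
      finally have "K - csc t A0 \<in> L" using Ldef K'Sym by simp
      then have "tr2 (K - csc t A0) S = 0" using Sp by blast
      then have "tr2 K S = t * tr2 A0 S" by (simp add: tr2_diff_left tr2_csc_left)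
      then show ?thesis using phiK[OF K] A0 by (simp add: t_def c_def field_simps)
    qed
    define Y where "Y = S - csc c \<Gamma>"
    have YSym: "Y \<in> Sym" unfolding Y_def using SSym GSym by (simp add: Sym_diff Sym_csc)
    have Y0: "tr2 K Y = 0" if "K \<in> Sym" for K
      using key[OF that] by (simp add: Y_def tr2_diff_right tr2_csc_right)
    have "Y $ a $ b = 0" for a b
    proof -
      have "tr2 (Bm a b) Y = 0" using Y0 Bm_Sym by blast
      then show ?thesis using YSym by (simp add: tr2_Bm Sym_iff split: if_splits)
    qed
    then have "Y = 0" by (simp add: vec_eq_iff)
    then show "S \<in> {csc c \<Gamma> | c. True}" by (auto simp: Y_def)
  qed
  then show ?thesis using GSym Gnz Lchar by blast
qed

section \<open>Lines and minors\<close>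

definition ent :: "'n::finite cmat \<Rightarrow> 'n \<times> 'n \<Rightarrow> complex" where
  "ent X \<alpha> = X $ fst \<alpha> $ snd \<alpha>"

definition m2 :: "'n::finite cmat \<Rightarrow> 'n cmat \<Rightarrow> 'n \<times> 'n \<Rightarrow> 'n \<times> 'n \<Rightarrow> complex" where
  "m2 u v \<alpha> \<beta> = ent u \<alpha> * ent v \<beta> - ent u \<beta> * ent v \<alpha>"

definition m3 :: "'n::finite cmat \<Rightarrow> 'n cmat \<Rightarrow> 'n cmat \<Rightarrow> 'n \<times> 'n \<Rightarrow> 'n \<times> 'n \<Rightarrow> 'n \<times> 'n \<Rightarrow> complex" where
  "m3 u v X \<alpha> \<beta> \<gamma> = ent X \<gamma> * m2 u v \<alpha> \<beta> - ent X \<beta> * m2 u v \<alpha> \<gamma> + ent X \<alpha> * m2 u v \<beta> \<gamma>"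

lemma ent_add [simp]: "ent (A + B) \<alpha> = ent A \<alpha> + ent B \<alpha>" by (simp add: ent_def)
lemma ent_csc [simp]: "ent (csc c A) \<alpha> = c * ent A \<alpha>" by (simp add: ent_def)
lemma ent_zero [simp]: "ent 0 \<alpha> = 0" by (simp add: ent_def)
lemma mat_eq_ent: "(A :: 'n::finite cmat) = B \<longleftrightarrow> (\<forall>\<alpha>. ent A \<alpha> = ent B \<alpha>)"
  by (auto simp: ent_def mat_eq_iff)

lemma m2_indep: "m2 u v \<alpha> \<beta> \<noteq> 0 \<Longrightarrow> indep2 u v"
proof (unfold indep2_def, intro allI impI)
  fix a b assume m: "m2 u v \<alpha> \<beta> \<noteq> 0" and e: "csc a u + csc b v = 0"
  have e1: "a * ent u \<alpha> + b * ent v \<alpha> = 0"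
    using arg_cong[OF e, of "\<lambda>X. ent X \<alpha>"] by simp
  have e2: "a * ent u \<beta> + b * ent v \<beta> = 0"
    using arg_cong[OF e, of "\<lambda>X. ent X \<beta>"] by simp
  have "a * m2 u v \<alpha> \<beta> = 0"
  proof -
    have "a * m2 u v \<alpha> \<beta> = ent v \<beta> * (a * ent u \<alpha> + b * ent v \<alpha>) - ent v \<alpha> * (a * ent u \<beta> + b * ent v \<beta>)"
      by (simp add: m2_def algebra_simps)
    then show ?thesis using e1 e2 by simp
  qed
  moreover have "b * m2 u v \<alpha> \<beta> = 0"
  proof -
    have "b * m2 u v \<alpha> \<beta> = ent u \<alpha> * (a * ent u \<beta> + b * ent v \<beta>) - ent u \<beta> * (a * ent u \<alpha> + b * ent v \<alpha>)"
      by (simp add: m2_def algebra_simps)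
    then show ?thesis using e1 e2 by simp
  qed
  ultimately show "a = 0 \<and> b = 0" using m by simp
qed

lemma indep_m2: assumes "indep2 u v" shows "\<exists>\<alpha> \<beta>. m2 u v \<alpha> \<beta> \<noteq> 0"
proof (rule ccontr)
  assume "\<not> ?thesis"
  then have z: "\<And>\<alpha> \<beta>. m2 u v \<alpha> \<beta> = 0" by blast
  show False
  proof (cases "u = 0")
    case True
    then have "csc 1 u + csc 0 v = 0" by simp
    then show False using assms unfolding indep2_def by fastforce
  next
    case False
    then obtain \<alpha> where a: "ent u \<alpha> \<noteq> 0" by (auto simp: mat_eq_ent)
    have "csc (ent v \<alpha>) u + csc (- ent u \<alpha>) v = 0"
    proof -
      have "ent v \<alpha> * ent u \<gamma> + - ent u \<alpha> * ent v \<gamma> = 0" for \<gamma>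
        using z[of \<gamma> \<alpha>] by (simp add: m2_def algebra_simps)
      then show ?thesis by (simp add: mat_eq_ent)
    qed
    then show False using assms a unfolding indep2_def by fastforce
  qed
qed

lemma span_m3: "X = csc a u + csc b v \<Longrightarrow> m3 u v X \<alpha> \<beta> \<gamma> = 0"
  by (simp add: m3_def m2_def algebra_simps)

lemma m3_span:
  assumes m: "m2 u v \<alpha> \<beta> \<noteq> 0" and z: "\<And>\<gamma>. m3 u v X \<alpha> \<beta> \<gamma> = 0"
  shows "\<exists>a b. X = csc a u + csc b v"
proof -
  define D where "D = m2 u v \<alpha> \<beta>"
  define a where "a = (ent X \<alpha> * ent v \<beta> - ent X \<beta> * ent v \<alpha>) / D"
  define b where "b = (ent u \<alpha> * ent X \<beta> - ent u \<beta> * ent X \<alpha>) / D"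
  have Dnz: "D \<noteq> 0" using m by (simp add: D_def)
  have aD: "a * D = ent X \<alpha> * ent v \<beta> - ent X \<beta> * ent v \<alpha>" using Dnz by (simp add: a_def)
  have bD: "b * D = ent u \<alpha> * ent X \<beta> - ent u \<beta> * ent X \<alpha>" using Dnz by (simp add: b_def)
  have "ent X \<gamma> = a * ent u \<gamma> + b * ent v \<gamma>" for \<gamma>
  proof -
    have e1: "ent X \<gamma> * D = ent X \<beta> * m2 u v \<alpha> \<gamma> - ent X \<alpha> * m2 u v \<beta> \<gamma>"
      using z[of \<gamma>] by (simp add: m3_def D_def algebra_simps)
    have e2: "(a * ent u \<gamma> + b * ent v \<gamma>) * D = (a * D) * ent u \<gamma> + (b * D) * ent v \<gamma>"
      by (simp add: algebra_simps)
    have "ent X \<gamma> * D = (a * ent u \<gamma> + b * ent v \<gamma>) * D"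
      unfolding e1 e2 aD bD by (simp add: m2_def algebra_simps)
    then show ?thesis using Dnz by simp
  qed
  then show ?thesis by (auto simp: mat_eq_ent)
qed

lemma on_line_m3:
  assumes "indep2 u v"
  shows "on_line X (u, v) \<longleftrightarrow> (\<forall>\<alpha> \<beta> \<gamma>. m3 u v X \<alpha> \<beta> \<gamma> = 0)"
proof
  assume "on_line X (u, v)"
  then obtain a b where "X = csc a u + csc b v" unfolding on_line_def by auto
  then show "\<forall>\<alpha> \<beta> \<gamma>. m3 u v X \<alpha> \<beta> \<gamma> = 0" using span_m3 by blast
next
  assume z: "\<forall>\<alpha> \<beta> \<gamma>. m3 u v X \<alpha> \<beta> \<gamma> = 0"
  obtain \<alpha> \<beta> where "m2 u v \<alpha> \<beta> \<noteq> 0" using indep_m2[OF assms] by blast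
  then obtain a b where "X = csc a u + csc b v" using m3_span z by blast
  then show "on_line X (u, v)" unfolding on_line_def by auto
qed

lemma csc_mult: "csc a A ** csc b B = csc (a * b) (A ** B)"
  by (simp add: mat_eq_iff matrix_matrix_mult_def sum_distrib_left algebra_simps)

lemma matrix_inv_props:
  assumes "invertible (K :: 'n::finite cmat)"
  shows "K ** matrix_inv K = mat 1 \<and> matrix_inv K ** K = mat 1"
  using assms unfolding invertible_def matrix_inv_def by (rule someI_ex)

lemma matrix_inv_eqI:
  assumes "(K :: 'n::finite cmat) ** B = mat 1" "B ** K = mat 1"
  shows "matrix_inv K = B"
  unfolding matrix_inv_def
proof (rule some_equality)
  show "K ** B = mat 1 \<and> B ** K = mat 1" using assms by simp
next
  fix A' assume A': "K ** A' = mat 1 \<and> A' ** K = mat 1"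
  have "A' = A' ** (K ** B)" using assms by simp
  also have "\<dots> = (A' ** K) ** B" by (simp add: matrix_mul_assoc)
  also have "\<dots> = B" using A' by simp
  finally show "A' = B" .
qed

lemma inv_scale:
  assumes "invertible (K :: 'n::finite cmat)" "c \<noteq> 0"
  shows "invertible (csc (1/c) K) \<and> matrix_inv (csc (1/c) K) = csc c (matrix_inv K)"
proof -
  have 1: "csc (1/c) K ** csc c (matrix_inv K) = mat 1"
    using matrix_inv_props[OF assms(1)] assms(2) by (simp add: csc_mult)
  have 2: "csc c (matrix_inv K) ** csc (1/c) K = mat 1"
    using matrix_inv_props[OF assms(1)] assms(2) by (simp add: csc_mult)
  show ?thesis using 1 2 matrix_inv_eqI[OF 1 2] unfolding invertible_def by blast
qed

lemma ppoint_csc: "c \<noteq> 0 \<Longrightarrow> ppoint (csc c X) = ppoint X"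
proof -
  assume c: "c \<noteq> 0"
  have "{csc d (csc c X) | d. True} = {csc d X | d. True}"
  proof (intro equalityI subsetI)
    fix Y assume "Y \<in> {csc d (csc c X) | d. True}" then show "Y \<in> {csc d X | d. True}" by auto
  next
    fix Y assume "Y \<in> {csc d X | d. True}"
    then obtain d where "Y = csc d X" by blast
    then have "Y = csc (d / c) (csc c X)" using c by simp
    then show "Y \<in> {csc d (csc c X) | d. True}" by blast
  qed
  then show ?thesis by (simp add: ppoint_def)
qed

lemma ppoint_eqD:
  assumes "ppoint X = ppoint Y" "Y \<noteq> 0"
  shows "\<exists>c. c \<noteq> 0 \<and> Y = csc c X"
proof -
  have "Y \<in> ppoint Y" unfolding ppoint_def by (rule CollectI, rule exI[of _ 1]) simp
  then have "Y \<in> ppoint X" using assms by simp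
  then obtain c where "Y = csc c X" unfolding ppoint_def by blast
  moreover have "c \<noteq> 0" using assms(2) calculation by auto
  ultimately show ?thesis by blast
qed

definition PCc :: "('n::finite cmat \<times> complex \<Rightarrow> complex) set" where
  "PCc = {\<lambda>x. fst x $ i $ j | i j. True} \<union> {\<lambda>x. snd x}"

lemma sum_restrict_le:
  fixes g :: "nat \<Rightarrow> complex"
  assumes "E \<le> D"
  shows "(\<Sum>j\<le>D. if j \<le> E then g j else 0) = (\<Sum>j\<le>E. g j)"
proof -
  have "(\<Sum>j\<le>D. if j \<le> E then g j else 0) = (\<Sum>j\<in>{j\<in>{..D}. j \<le> E}. g j)"
    by (rule sum.inter_filter[symmetric]) simp
  also have "{j\<in>{..D}. j \<le> E} = {..E}" using assms by auto
  finally show ?thesis .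
qed

lemma expand2:
  fixes f :: "'n::finite cmat \<Rightarrow> complex" and G :: "'n cmat"
  assumes f: "f \<in> polyfuns mcoords"
  shows "\<exists>D e. (\<forall>k j. e k j \<in> polyfuns mcoords) \<and> (\<forall>k j W. (D < k \<or> D < j) \<longrightarrow> e k j W = 0) \<and>
     (\<forall>W \<sigma> \<tau>. f (csc \<sigma> W + csc \<tau> G) = (\<Sum>k\<le>D. \<Sum>j\<le>D. e k j W * \<sigma> ^ k * \<tau> ^ j))"
proof -
  have "\<exists>D q. (\<forall>k. q k \<in> polyfuns (PCc :: ('n cmat \<times> complex \<Rightarrow> complex) set)) \<and> (\<forall>k x. D < k \<longrightarrow> q k x = 0) \<and>
     (\<forall>x s. f ((\<lambda>x s. csc s (fst x) + csc (snd x) G) x s) = (\<Sum>k\<le>D. q k x * s ^ k))"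
  proof (rule pf_expand_sum[OF f])
    fix c :: "'n cmat \<Rightarrow> complex" assume "c \<in> mcoords"
    then obtain i j where c: "c = (\<lambda>A. A $ i $ j)" by (auto simp: mcoords_def)
    have a: "(\<lambda>x::'n cmat \<times> complex. snd x * G $ i $ j) \<in> polyfuns PCc"
      by (rule pf_mult, rule pf_coord) (auto simp: PCc_def intro: pf_const)
    have b: "(\<lambda>x::'n cmat \<times> complex. fst x $ i $ j) \<in> polyfuns PCc"
      by (rule pf_coord) (auto simp: PCc_def)
    show "\<exists>a b. a \<in> polyfuns PCc \<and> b \<in> polyfuns PCc \<and>
      (\<forall>x s. c ((\<lambda>x s. csc s (fst x) + csc (snd x) G) x s) = a x + b x * s)"
      by (rule exI[of _ "\<lambda>x. snd x * G $ i $ j"], rule exI[of _ "\<lambda>x. fst x $ i $ j"])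
         (simp add: a b c algebra_simps)
  qed
  then obtain D1 q1 where q1: "\<forall>k. q1 k \<in> polyfuns (PCc :: ('n cmat \<times> complex \<Rightarrow> complex) set)"
    "\<forall>k x. D1 < k \<longrightarrow> q1 k x = 0"
    "\<forall>x s. f (csc s (fst x) + csc (snd x) G) = (\<Sum>k\<le>D1. q1 k x * s ^ k)" by auto
  have ex2: "\<exists>D q. (\<forall>j. q j \<in> polyfuns mcoords) \<and> (\<forall>j x. D < j \<longrightarrow> q j x = 0) \<and>
     (\<forall>W t. q1 k ((\<lambda>W t. (W, t)) W t) = (\<Sum>j\<le>D. q j W * t ^ j))" for k
  proof (rule pf_expand_sum[of "q1 k" PCc])
    show "q1 k \<in> polyfuns PCc" using q1(1) by blast
  next
    fix c :: "'n cmat \<times> complex \<Rightarrow> complex" assume "c \<in> PCc"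
    then consider (e) i j where "c = (\<lambda>x. fst x $ i $ j)" | (s) "c = snd" unfolding PCc_def by auto
    then show "\<exists>a b. a \<in> polyfuns mcoords \<and> b \<in> polyfuns mcoords \<and>
      (\<forall>x s. c ((\<lambda>W t. (W, t)) x s) = a x + b x * s)"
    proof cases
      case (e i j) then show ?thesis
        by (intro exI[of _ "\<lambda>A. A $ i $ j"] exI[of _ "\<lambda>_. 0"]) (simp add: mcoord pf_const)
    next
      case s then show ?thesis
        by (intro exI[of _ "\<lambda>_. 0"] exI[of _ "\<lambda>_. 1"]) (simp add: pf_const)
    qed
  qed
  then have "\<forall>k. \<exists>D. \<exists>q. (\<forall>j. q j \<in> polyfuns mcoords) \<and> (\<forall>j x. D < j \<longrightarrow> q j x = 0) \<and>
     (\<forall>W t. q1 k (W, t) = (\<Sum>j\<le>D. q j W * t ^ j))" by simp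
  then obtain D2 where "\<forall>k. \<exists>q. (\<forall>j. q j \<in> polyfuns mcoords) \<and> (\<forall>j x. D2 k < j \<longrightarrow> q j x = 0) \<and>
     (\<forall>W t. q1 k (W, t) = (\<Sum>j\<le>D2 k. q j W * t ^ j))" by (metis choice)
  then obtain q2 where q2: "\<forall>k. (\<forall>j. q2 k j \<in> polyfuns mcoords) \<and> (\<forall>j x. D2 k < j \<longrightarrow> q2 k j x = 0) \<and>
     (\<forall>W t. q1 k (W, t) = (\<Sum>j\<le>D2 k. q2 k j W * t ^ j))" by (metis choice)
  define D where "D = max D1 (Max (D2 ` {..D1}))"
  have D1D: "D1 \<le> D" by (simp add: D_def)
  have D2D: "D2 k \<le> D" if "k \<le> D1" for k
  proof -
    have "D2 k \<le> Max (D2 ` {..D1})" using that by (intro Max_ge) auto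
    then show ?thesis by (simp add: D_def)
  qed
  define e where "e k j W = (if k \<le> D1 \<and> j \<le> D2 k then q2 k j W else 0)" for k j W
  have epf: "e k j \<in> polyfuns mcoords" for k j
  proof (cases "k \<le> D1 \<and> j \<le> D2 k")
    case True
    have "e k j = q2 k j" using True unfolding e_def by (intro ext) simp
    then show ?thesis using q2 by simp
  next
    case False
    have "e k j = (\<lambda>_. 0)" using False unfolding e_def by (intro ext) auto
    then show ?thesis by (simp add: pf_const)
  qed
  have ez: "e k j W = 0" if "D < k \<or> D < j" for k j W
    using that D1D D2D by (auto simp: e_def) (meson le_trans not_le)
  have eq: "f (csc \<sigma> W + csc \<tau> G) = (\<Sum>k\<le>D. \<Sum>j\<le>D. e k j W * \<sigma> ^ k * \<tau> ^ j)" for W \<sigma> \<tau>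
  proof -
    have "f (csc \<sigma> W + csc \<tau> G) = (\<Sum>k\<le>D1. q1 k (W, \<tau>) * \<sigma> ^ k)"
      using q1(3) by (metis fst_conv snd_conv)
    also have "\<dots> = (\<Sum>k\<le>D1. \<Sum>j\<le>D2 k. q2 k j W * \<sigma> ^ k * \<tau> ^ j)"
      using q2 by (simp add: sum_distrib_left sum_distrib_right algebra_simps)
    also have "\<dots> = (\<Sum>k\<le>D. if k \<le> D1 then (\<Sum>j\<le>D2 k. q2 k j W * \<sigma> ^ k * \<tau> ^ j) else 0)"
      using sum_restrict_le[OF D1D, of "\<lambda>k. \<Sum>j\<le>D2 k. q2 k j W * \<sigma> ^ k * \<tau> ^ j"] by simp
    also have "\<dots> = (\<Sum>k\<le>D. \<Sum>j\<le>D. e k j W * \<sigma> ^ k * \<tau> ^ j)"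
    proof (intro sum.cong refl)
      fix k assume "k \<in> {..D}"
      show "(if k \<le> D1 then (\<Sum>j\<le>D2 k. q2 k j W * \<sigma> ^ k * \<tau> ^ j) else 0) = (\<Sum>j\<le>D. e k j W * \<sigma> ^ k * \<tau> ^ j)"
      proof (cases "k \<le> D1")
        case True
        have "(\<Sum>j\<le>D. e k j W * \<sigma> ^ k * \<tau> ^ j) = (\<Sum>j\<le>D. if j \<le> D2 k then q2 k j W * \<sigma> ^ k * \<tau> ^ j else 0)"
          using True by (intro sum.cong refl) (simp add: e_def)
        also have "\<dots> = (\<Sum>j\<le>D2 k. q2 k j W * \<sigma> ^ k * \<tau> ^ j)"
          by (rule sum_restrict_le[OF D2D[OF True]])
        finally show ?thesis using True by simp
      next
        case False then show ?thesis by (simp add: e_def)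
      qed
    qed
    finally show ?thesis .
  qed
  show ?thesis using epf ez eq by blast
qed

locale hsetup =
  fixes L :: "'n::finite cmat set" and \<Gamma> :: "'n cmat" and p q :: 'n
  assumes GSym: "\<Gamma> \<in> Sym" and Gpq: "\<Gamma> $ p $ q \<noteq> 0"
    and Lchar: "L = {K\<in>Sym. tr2 K \<Gamma> = 0}" and perpL: "perp L = {csc c \<Gamma> | c. True}"
begin

definition lam :: "'n cmat \<Rightarrow> complex" where
  "lam X = X $ p $ q / \<Gamma> $ p $ q"

definition Wl :: "'n cmat \<Rightarrow> 'n cmat \<Rightarrow> 'n cmat" where
  "Wl u v = csc (lam v) u + csc (- lam u) v"

lemma lam_add [simp]: "lam (A + B) = lam A + lam B" by (simp add: lam_def add_divide_distrib)
lemma lam_csc [simp]: "lam (csc c A) = c * lam A" by (simp add: lam_def)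
lemma lam_G [simp]: "lam \<Gamma> = 1" using Gpq by (simp add: lam_def)
lemma lam_Wl [simp]: "lam (Wl u v) = 0" by (simp add: Wl_def algebra_simps)
lemma Wl_Sym: "u \<in> Sym \<Longrightarrow> v \<in> Sym \<Longrightarrow> Wl u v \<in> Sym" by (simp add: Wl_def Sym_add Sym_csc)
lemma Gnz: "\<Gamma> \<noteq> 0" using Gpq by auto

lemma lam_pf: "(\<lambda>t. lam (h t)) \<in> polyfuns C" if "\<And>i j. (\<lambda>t. h t $ i $ j) \<in> polyfuns C"
proof -
  have "(\<lambda>t. h t $ p $ q * (1 / \<Gamma> $ p $ q)) \<in> polyfuns C" using that by (intro pf_mult pf_const)
  then show ?thesis by (simp add: lam_def)
qed

lemma Wl_pf: "(\<lambda>t. Wl (u t) (v t) $ i $ j) \<in> polyfuns C"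
  if "\<And>i j. (\<lambda>t. u t $ i $ j) \<in> polyfuns C" "\<And>i j. (\<lambda>t. v t $ i $ j) \<in> polyfuns C"
proof -
  have "(\<lambda>t. lam (v t) * u t $ i $ j + - lam (u t) * v t $ i $ j) \<in> polyfuns C"
    using that by (intro pf_add pf_mult pf_neg lam_pf) auto
  then show ?thesis by (simp add: Wl_def)
qed

lemma not_prop_G:
  assumes "X = csc \<sigma> W + csc \<tau> \<Gamma>" "lam W = 0" "W \<noteq> 0" "\<sigma> \<noteq> 0"
  shows "X \<noteq> csc a \<Gamma>"
proof
  assume "X = csc a \<Gamma>"
  then have "csc \<sigma> W = csc (a - \<tau>) \<Gamma>" using assms(1) by (simp add: mat_eq_iff algebra_simps)
  then have "lam (csc \<sigma> W) = lam (csc (a - \<tau>) \<Gamma>)" by simp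
  then have "a - \<tau> = 0" using assms by simp
  then have "csc \<sigma> W = 0" using \<open>csc \<sigma> W = csc (a - \<tau>) \<Gamma>\<close> by simp
  then have "W = 0" using assms(4) by (simp add: mat_eq_iff)
  then show False using assms(3) by simp
qed

context
  fixes u v :: "'n cmat"
  assumes ind: "indep2 u v" and Gon: "on_line \<Gamma> (u, v)"
begin

lemma lam_uv_nz: "lam u \<noteq> 0 \<or> lam v \<noteq> 0"
proof -
  obtain a b where G: "\<Gamma> = csc a u + csc b v" using Gon by (auto simp: on_line_def)
  have "lam \<Gamma> = lam (csc a u + csc b v)" using G by (rule arg_cong)
  then have "1 = a * lam u + b * lam v" by simp
  then show ?thesis by auto
qed

lemma Wl_nz: "Wl u v \<noteq> 0"
proof
  assume "Wl u v = 0"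
  then have "csc (lam v) u + csc (- lam u) v = 0" by (simp add: Wl_def)
  then have "lam v = 0 \<and> - lam u = 0" using ind unfolding indep2_def by blast
  then show False using lam_uv_nz by simp
qed

lemma span_decomp:
  assumes "on_line X (u, v)"
  shows "\<exists>\<sigma>. X = csc \<sigma> (Wl u v) + csc (lam X) \<Gamma>"
proof -
  obtain a b where X: "X = csc a u + csc b v" using assms by (auto simp: on_line_def)
  obtain \<alpha> \<beta> where G: "\<Gamma> = csc \<alpha> u + csc \<beta> v" using Gon by (auto simp: on_line_def)
  define t where "t = lam X"
  define c1 where "c1 = a - t * \<alpha>"
  define c2 where "c2 = b - t * \<beta>"
  have Xe: "X $ i $ j = a * u $ i $ j + b * v $ i $ j" for i j using X by simp
  have Ge: "\<Gamma> $ i $ j = \<alpha> * u $ i $ j + \<beta> * v $ i $ j" for i j using G by simp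
  have Y: "X = csc c1 u + csc c2 v + csc t \<Gamma>"
    unfolding c1_def c2_def mat_eq_iff by (simp add: Xe Ge algebra_simps)
  have "lam X = lam (csc c1 u + csc c2 v + csc t \<Gamma>)" using Y by (rule arg_cong)
  then have "lam X = lam (csc c1 u + csc c2 v) + t" by simp
  then have l0: "c1 * lam u + c2 * lam v = 0" using t_def by simp
  show ?thesis
  proof (cases "lam v = 0")
    case False
    have "csc c1 u + csc c2 v = csc (c1 / lam v) (Wl u v)"
    proof -
      have "c2 * lam v = - (c1 * lam u)" using l0 by (metis add.commute eq_neg_iff_add_eq_0)
      then have "c2 = - (c1 * lam u) / lam v" using False by (simp add: field_simps)
      then show ?thesis using False by (simp add: Wl_def mat_eq_iff algebra_simps)
    qed
    then show ?thesis using Y t_def by metis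
  next
    case True
    then have lu: "lam u \<noteq> 0" using lam_uv_nz by simp
    then have "c1 = 0" using l0 True by simp
    have "csc c1 u + csc c2 v = csc (- c2 / lam u) (Wl u v)"
      using True lu \<open>c1 = 0\<close> by (simp add: Wl_def mat_eq_iff)
    then show ?thesis using Y t_def by metis
  qed
qed

end

definition Inv :: "'n cmat set" where
  "Inv = {matrix_inv K | K. K \<in> L \<and> invertible K}"

lemma R_def': "reciprocal L = zclosure mcoords Sym Inv"
  by (simp add: reciprocal_def Inv_def)

lemma L_csc: "K \<in> L \<Longrightarrow> csc c K \<in> L"
  using Lchar by (simp add: Sym_csc tr2_csc_left)

lemma Inv_cone: "Y \<in> Inv \<Longrightarrow> c \<noteq> 0 \<Longrightarrow> csc c Y \<in> Inv"
proof -
  assume Y: "Y \<in> Inv" and c: "c \<noteq> 0"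
  then obtain K where K: "Y = matrix_inv K" "K \<in> L" "invertible K" by (auto simp: Inv_def)
  have "invertible (csc (1/c) K) \<and> matrix_inv (csc (1/c) K) = csc c (matrix_inv K)"
    using inv_scale[OF K(3) c] .
  moreover have "csc (1/c) K \<in> L" using K(2) by (rule L_csc)
  ultimately show ?thesis using K(1) unfolding Inv_def by force
qed

lemma R_Sym: "X \<in> reciprocal L \<Longrightarrow> X \<in> Sym"
  unfolding R_def' by (rule zclosure_in)

lemma csc_pf: "(\<lambda>X. csc c X $ i $ j) \<in> polyfuns mcoords"
proof -
  have "(\<lambda>X. c * X $ i $ j) \<in> polyfuns mcoords" by (rule pf_mult[OF pf_const mcoord])
  then show ?thesis by simp
qed

lemma R_cone: "X \<in> reciprocal L \<Longrightarrow> c \<noteq> 0 \<Longrightarrow> csc c X \<in> reciprocal L"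
proof -
  assume X: "X \<in> reciprocal L" and c: "c \<noteq> 0"
  show ?thesis unfolding R_def' zclosure_char
  proof (safe)
    show "csc c X \<in> Sym" using R_Sym[OF X] by (rule Sym_csc)
  next
    fix g :: "'n cmat \<Rightarrow> complex" assume g: "g \<in> polyfuns mcoords" "\<forall>a\<in>Inv. g a = 0"
    have "(\<lambda>Y. g (csc c Y)) \<in> polyfuns mcoords" using g(1) by (rule pf_comp_m) (rule csc_pf)
    moreover have "\<forall>a\<in>Inv. g (csc c a) = 0" using g(2) Inv_cone c by blast
    ultimately show "g (csc c X) = 0" using X unfolding R_def' by (rule_tac zclosure_vanish) auto
  qed
qed

lemma perp_iff: "G \<in> perp L \<longleftrightarrow> (\<exists>c. G = csc c \<Gamma>)"
  using perpL by auto


end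


locale hmain = hsetup L \<Gamma> p q for L :: "'n::finite cmat set" and \<Gamma> p q +
  fixes d :: nat and f0 :: "'n cmat \<Rightarrow> complex" and W0 :: "'n cmat" and i0 :: 'n
    and f :: "'n cmat \<Rightarrow> complex" and X0 :: "'n cmat" and D :: nat and e :: "nat \<Rightarrow> nat \<Rightarrow> 'n cmat \<Rightarrow> complex"
  assumes dnz: "d \<noteq> 0"
    and f0_pf: "f0 \<in> polyfuns mcoords"
    and f0_cnt: "\<And>X. X \<in> Sym \<Longrightarrow> f0 X \<noteq> 0 \<Longrightarrow>
        finite (reciprocal L \<inter> {G + X | G. G \<in> perp L}) \<and> card (reciprocal L \<inter> {G + X | G. G \<in> perp L}) = d"
    and W0: "W0 \<in> Sym" "f0 W0 \<noteq> 0"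
    and i0: "i0 \<noteq> p"
    and f_pf: "f \<in> polyfuns mcoords"
    and f_R: "\<And>X. X \<in> reciprocal L \<Longrightarrow> f X = 0"
    and X0: "X0 \<in> Sym" "f X0 \<noteq> 0"
    and e_pf: "\<And>k j. e k j \<in> polyfuns mcoords"
    and e_zero: "\<And>k j W. D < k \<or> D < j \<Longrightarrow> e k j W = 0"
    and e_exp: "\<And>W \<sigma> \<tau>. f (csc \<sigma> W + csc \<tau> \<Gamma>) = (\<Sum>k\<le>D. \<Sum>j\<le>D. e k j W * \<sigma> ^ k * \<tau> ^ j)"
begin

definition acoef :: "nat \<Rightarrow> nat \<Rightarrow> 'n cmat \<Rightarrow> complex" where
  "acoef dg k W = (\<Sum>j\<le>D. if k + j = dg then e k j W else 0)"

definition atc :: "nat \<Rightarrow> nat \<Rightarrow> 'n cmat \<Rightarrow> complex" where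
  "atc dg k W = acoef dg k (W + csc (- lam W) \<Gamma>)"

lemma acoef_pf: "acoef dg k \<in> polyfuns mcoords"
proof -
  have "(\<lambda>W. \<Sum>j\<le>D. if k + j = dg then e k j W else 0) \<in> polyfuns mcoords"
  proof (rule pf_sum)
    fix j show "(\<lambda>W. if k + j = dg then e k j W else 0) \<in> polyfuns mcoords"
      by (cases "k + j = dg") (simp_all add: e_pf pf_const)
  qed simp
  then show ?thesis by (simp add: acoef_def[abs_def])
qed

lemma shift_pf: "(\<lambda>W. (W + csc (- lam W) \<Gamma>) $ i $ j) \<in> polyfuns mcoords"
proof -
  have "(\<lambda>W. W $ i $ j + - lam W * \<Gamma> $ i $ j) \<in> polyfuns mcoords"
    by (intro pf_add pf_mult pf_neg pf_const mcoord lam_pf)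
  then show ?thesis by simp
qed

lemma atc_pf: "atc dg k \<in> polyfuns mcoords"
proof -
  have "(\<lambda>W. acoef dg k (W + csc (- lam W) \<Gamma>)) \<in> polyfuns mcoords"
    using acoef_pf by (rule pf_comp_m) (rule shift_pf)
  then show ?thesis by (simp add: atc_def[abs_def])
qed

lemma acoef_big: "D < k \<or> dg < k \<Longrightarrow> acoef dg k W = 0"
  unfolding acoef_def by (intro sum.neutral) (auto simp: e_zero)

lemma atc_lam0: "lam W = 0 \<Longrightarrow> atc dg k W = acoef dg k W"
  by (simp add: atc_def)

lemma cone_comp:
  assumes XR: "csc \<sigma> W + csc \<tau> \<Gamma> \<in> reciprocal L"
  shows "(\<Sum>k\<le>D. acoef dg k W * \<sigma> ^ k * \<tau> ^ (dg - k)) = 0"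
proof -
  define Q where "Q = (\<Sum>k\<le>D. \<Sum>j\<le>D. monom (e k j W * \<sigma> ^ k * \<tau> ^ j) (k + j))"
  have pQ: "poly Q c = f (csc (c * \<sigma>) W + csc (c * \<tau>) \<Gamma>)" for c
    unfolding Q_def e_exp by (simp add: poly_sum poly_monom power_add power_mult_distrib algebra_simps)
  have root: "poly Q c = 0" if "c \<noteq> 0" for c
  proof -
    have "csc c (csc \<sigma> W + csc \<tau> \<Gamma>) \<in> reciprocal L" using R_cone[OF XR that] .
    moreover have "csc c (csc \<sigma> W + csc \<tau> \<Gamma>) = csc (c * \<sigma>) W + csc (c * \<tau>) \<Gamma>"
      by (simp add: mat_eq_iff algebra_simps)
    ultimately show ?thesis using pQ f_R by simp
  qed
  have "Q = 0"
  proof (rule ccontr)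
    assume "Q \<noteq> 0"
    then have "finite {c. poly Q c = 0}" by (rule poly_roots_finite)
    moreover have "UNIV - {0} \<subseteq> {c. poly Q c = 0}" using root by auto
    ultimately have "finite (UNIV - {0::complex})" by (rule finite_subset[rotated])
    then show False by (simp add: infinite_UNIV_char_0)
  qed
  then have "coeff Q dg = 0" by simp
  moreover have "coeff Q dg = (\<Sum>k\<le>D. acoef dg k W * \<sigma> ^ k * \<tau> ^ (dg - k))"
  proof -
    have "coeff Q dg = (\<Sum>k\<le>D. \<Sum>j\<le>D. if k + j = dg then e k j W * \<sigma> ^ k * \<tau> ^ j else 0)"
      unfolding Q_def by (simp add: coeff_sum coeff_monom)
    also have "\<dots> = (\<Sum>k\<le>D. acoef dg k W * \<sigma> ^ k * \<tau> ^ (dg - k))"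
    proof (intro sum.cong refl)
      fix k
      have "(\<Sum>j\<le>D. if k + j = dg then e k j W * \<sigma> ^ k * \<tau> ^ j else 0)
          = (\<Sum>j\<le>D. (if k + j = dg then e k j W else 0) * (\<sigma> ^ k * \<tau> ^ (dg - k)))"
        by (intro sum.cong refl) auto
      also have "\<dots> = acoef dg k W * \<sigma> ^ k * \<tau> ^ (dg - k)"
        by (simp add: acoef_def sum_distrib_right mult.assoc)
      finally show "(\<Sum>j\<le>D. if k + j = dg then e k j W * \<sigma> ^ k * \<tau> ^ j else 0) = acoef dg k W * \<sigma> ^ k * \<tau> ^ (dg - k)" .
    qed
    finally show ?thesis .
  qed
  ultimately show ?thesis by simp
qed


lemma exists_dr: "\<exists>dg k W. W \<in> Sym \<and> atc dg k W \<noteq> 0"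
proof -
  define X0' where "X0' = X0 + csc (- lam X0) \<Gamma>"
  have "X0 = csc 1 X0' + csc (lam X0) \<Gamma>" by (simp add: X0'_def mat_eq_iff)
  then have "f X0 = (\<Sum>k\<le>D. \<Sum>j\<le>D. e k j X0' * 1 ^ k * lam X0 ^ j)" using e_exp by metis
  then have "(\<Sum>k\<le>D. \<Sum>j\<le>D. e k j X0' * 1 ^ k * lam X0 ^ j) \<noteq> 0" using X0 by simp
  then obtain k where k: "k \<le> D" "(\<Sum>j\<le>D. e k j X0' * 1 ^ k * lam X0 ^ j) \<noteq> 0"
    by (metis (no_types, lifting) atMost_iff sum.neutral)
  then obtain j where j: "j \<le> D" "e k j X0' * 1 ^ k * lam X0 ^ j \<noteq> 0"
    by (metis (no_types, lifting) atMost_iff sum.neutral)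
  have "acoef (k + j) k X0' = (\<Sum>j'\<le>D. if j' = j then e k j' X0' else 0)"
    unfolding acoef_def by (intro sum.cong refl) auto
  also have "\<dots> = e k j X0'" using j(1) by (simp add: sum.delta)
  finally have "atc (k + j) k X0 \<noteq> 0" using j(2) by (simp add: atc_def X0'_def)
  then show ?thesis using X0(1) by blast
qed

definition dd :: nat where "dd = (SOME dg. \<exists>k. \<exists>W\<in>Sym. atc dg k W \<noteq> 0)"
definition r :: nat where "r = (LEAST k. \<exists>W\<in>Sym. atc dd k W \<noteq> 0)"

lemma dd_ex: "\<exists>k. \<exists>W\<in>Sym. atc dd k W \<noteq> 0"
  unfolding dd_def by (rule someI_ex) (use exists_dr in blast)

lemma r_ex: "\<exists>W\<in>Sym. atc dd r W \<noteq> 0"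
  unfolding r_def by (rule LeastI_ex) (rule dd_ex)

lemma r_min: "k < r \<Longrightarrow> W \<in> Sym \<Longrightarrow> atc dd k W = 0"
  unfolding r_def using not_less_Least by blast

lemma r_le: "r \<le> D" "r \<le> dd"
proof -
  obtain W where "atc dd r W \<noteq> 0" using r_ex by blast
  then have "\<not> (D < r \<or> dd < r)" unfolding atc_def using acoef_big by blast
  then show "r \<le> D" "r \<le> dd" by auto
qed

definition Pol :: "'n \<times> 'n \<Rightarrow> 'n cmat \<Rightarrow> 'n cmat \<Rightarrow> 'n cmat \<Rightarrow> complex" where
  "Pol \<alpha> S u v = (\<Sum>k\<le>D. if r \<le> k then (ent S \<alpha> - lam S * ent \<Gamma> \<alpha>) ^ (k - r) * ent (Wl u v) \<alpha> ^ (dd - k)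
      * lam S ^ (dd - k) * atc dd k (Wl u v) else 0)"

lemma Pol_vanish:
  assumes SR: "S \<in> reciprocal L" and S: "S = csc \<sigma> (Wl u v) + csc \<tau> \<Gamma>" and \<sigma>: "\<sigma> \<noteq> 0"
    and WS: "Wl u v \<in> Sym"
  shows "Pol \<alpha> S u v = 0"
proof -
  define W where "W = Wl u v"
  define w where "w = ent W \<alpha>"
  have lamS: "lam S = \<tau>" using S by simp
  have entS: "ent S \<alpha> - lam S * ent \<Gamma> \<alpha> = \<sigma> * w" using S by (simp add: lamS w_def W_def)
  have cone: "(\<Sum>k\<le>D. acoef dd k W * \<sigma> ^ k * \<tau> ^ (dd - k)) = 0"
    using cone_comp SR S W_def by blast
  have trm: "\<sigma> ^ r * (if r \<le> k then (\<sigma> * w) ^ (k - r) * w ^ (dd - k) * \<tau> ^ (dd - k) * atc dd k W else 0)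
      = w ^ (dd - r) * (acoef dd k W * \<sigma> ^ k * \<tau> ^ (dd - k))" for k
  proof (cases "r \<le> k")
    case False
    then have "atc dd k W = 0" using r_min WS W_def by simp
    then have "acoef dd k W = 0" using atc_lam0[of W] W_def by simp
    then show ?thesis using False by simp
  next
    case True
    show ?thesis
    proof (cases "dd < k")
      case True
      then have "acoef dd k W = 0" by (simp add: acoef_big)
      moreover have "atc dd k W = 0" using True atc_lam0[of W] W_def by (simp add: acoef_big)
      ultimately show ?thesis by simp
    next
      case False
      have e1: "\<sigma> ^ k = \<sigma> ^ r * \<sigma> ^ (k - r)" using \<open>r \<le> k\<close> by (simp add: power_add[symmetric])
      have e2: "w ^ (dd - r) = w ^ (k - r) * w ^ (dd - k)" using \<open>r \<le> k\<close> False by (simp add: power_add[symmetric])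
      have "atc dd k W = acoef dd k W" using atc_lam0[of W] W_def by simp
      then show ?thesis using \<open>r \<le> k\<close> by (simp add: e1 e2 power_mult_distrib algebra_simps)
    qed
  qed
  have "\<sigma> ^ r * Pol \<alpha> S u v = (\<Sum>k\<le>D. \<sigma> ^ r * (if r \<le> k then (\<sigma> * w) ^ (k - r) * w ^ (dd - k) * \<tau> ^ (dd - k) * atc dd k W else 0))"
    unfolding Pol_def sum_distrib_left entS unfolding lamS W_def w_def by (rule refl)
  also have "\<dots> = w ^ (dd - r) * (\<Sum>k\<le>D. acoef dd k W * \<sigma> ^ k * \<tau> ^ (dd - k))"
    by (simp add: trm sum_distrib_left)
  also have "\<dots> = 0" using cone by simp
  finally show ?thesis using \<sigma> by simp
qed

lemma Pol_G: "Pol \<alpha> (csc a \<Gamma>) u v = ent (Wl u v) \<alpha> ^ (dd - r) * a ^ (dd - r) * atc dd r (Wl u v)"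
proof -
  have "Pol \<alpha> (csc a \<Gamma>) u v = (\<Sum>k\<le>D. if k = r then ent (Wl u v) \<alpha> ^ (dd - r) * a ^ (dd - r) * atc dd r (Wl u v) else 0)"
    unfolding Pol_def by (intro sum.cong refl) auto
  also have "\<dots> = ent (Wl u v) \<alpha> ^ (dd - r) * a ^ (dd - r) * atc dd r (Wl u v)"
    using r_le by (simp add: sum.delta)
  finally show ?thesis .
qed

lemma ent_pf: "(\<lambda>t. ent (h t) \<alpha>) \<in> polyfuns C" if "\<And>i j. (\<lambda>t. h t $ i $ j) \<in> polyfuns C"
  using that by (simp add: ent_def)

lemma Pol_pf: "(\<lambda>t. Pol \<alpha> (fst t) (fst (snd (snd t))) (snd (snd (snd t)))) \<in> polyfuns tcoords"
proof -
  have S: "\<And>i j. (\<lambda>t. fst t $ i $ j) \<in> polyfuns tcoords" by (rule tcoord1)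
  have W: "\<And>i j. (\<lambda>t. Wl (fst (snd (snd t))) (snd (snd (snd t))) $ i $ j) \<in> polyfuns tcoords"
    by (rule Wl_pf) (rule tcoord3, rule tcoord4)
  show ?thesis unfolding Pol_def
  proof (rule pf_sum)
    fix k
    show "(\<lambda>t. if r \<le> k then (ent (fst t) \<alpha> - lam (fst t) * ent \<Gamma> \<alpha>) ^ (k - r) *
        ent (Wl (fst (snd (snd t))) (snd (snd (snd t)))) \<alpha> ^ (dd - k) * lam (fst t) ^ (dd - k) *
        atc dd k (Wl (fst (snd (snd t))) (snd (snd (snd t)))) else 0) \<in> polyfuns tcoords"
    proof (cases "r \<le> k")
      case True
      have "(\<lambda>t. (ent (fst t) \<alpha> - lam (fst t) * ent \<Gamma> \<alpha>) ^ (k - r) *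
        ent (Wl (fst (snd (snd t))) (snd (snd (snd t)))) \<alpha> ^ (dd - k) * lam (fst t) ^ (dd - k) *
        atc dd k (Wl (fst (snd (snd t))) (snd (snd (snd t))))) \<in> polyfuns tcoords"
        by (intro pf_mult pf_pow pf_diff ent_pf lam_pf pf_const S W pf_comp_m[OF atc_pf])
      then show ?thesis using True by simp
    qed (simp add: pf_const)
  qed simp
qed


definition Jp :: "('n cmat \<times> 'n cmat) set" where
  "Jp = {l \<in> IndepPairs. on_line \<Gamma> l}"

definition Mset :: "('n cmat \<times> 'n cmat) set" where
  "Mset = {l. \<exists>S G. (S, G, l) \<in> incidence0 L}"

definition S0map :: "'n cmat \<times> 'n cmat \<Rightarrow> 'n cmat" where
  "S0map l = Wl (fst l) (snd l) + csc (lam (fst l)) \<Gamma>"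

definition hfun :: "'n cmat \<times> 'n cmat \<Rightarrow> complex" where
  "hfun l = f0 (S0map l) * atc dd r (Wl (fst l) (snd l))"

lemma on_line_scale: "on_line X l \<Longrightarrow> on_line (csc c X) l"
  unfolding on_line_def by (auto simp: csc_add) blast

lemma G_on_line: "on_line (csc c \<Gamma>) l \<Longrightarrow> c \<noteq> 0 \<Longrightarrow> on_line \<Gamma> l"
  using on_line_scale[of "csc c \<Gamma>" l "1/c"] by simp

lemma ppoint_G: "a \<noteq> 0 \<Longrightarrow> ppoint (csc a \<Gamma>) = ppoint \<Gamma>" by (rule ppoint_csc)

lemma inc0_facts:
  assumes "(S, G, (u, v)) \<in> incidence0 L"
  shows "(u, v) \<in> Jp" "S \<in> reciprocal L" "S \<noteq> 0" "on_line S (u, v)" "u \<in> Sym" "v \<in> Sym" "indep2 u v"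
    "\<exists>c. c \<noteq> 0 \<and> G = csc c \<Gamma>"
    "\<exists>\<sigma>. \<sigma> \<noteq> 0 \<and> S = csc \<sigma> (Wl u v) + csc (lam S) \<Gamma>"
proof -
  have A: "S \<in> reciprocal L" "S \<noteq> 0" "G \<in> perp L" "G \<noteq> 0" "(u, v) \<in> IndepPairs"
    "ppoint S \<noteq> ppoint G" "on_line S (u, v)" "on_line G (u, v)"
    using assms by (auto simp: incidence0_def)
  then obtain c where c: "G = csc c \<Gamma>" using perp_iff by blast
  then have cnz: "c \<noteq> 0" using A(4) by auto
  show Gc: "\<exists>c. c \<noteq> 0 \<and> G = csc c \<Gamma>" using c cnz by blast
  have Gon: "on_line \<Gamma> (u, v)" using A(8) c cnz G_on_line by blast
  show "(u, v) \<in> Jp" using A(5) Gon by (simp add: Jp_def)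
  show "S \<in> reciprocal L" "S \<noteq> 0" "on_line S (u, v)" using A by auto
  show uS: "u \<in> Sym" "v \<in> Sym" and ind: "indep2 u v" using A(5) by (auto simp: IndepPairs_def)
  obtain \<sigma> where \<sigma>: "S = csc \<sigma> (Wl u v) + csc (lam S) \<Gamma>" using span_decomp[OF ind Gon A(7)] by blast
  have "\<sigma> \<noteq> 0"
  proof
    assume "\<sigma> = 0"
    then have S: "S = csc (lam S) \<Gamma>" using \<sigma> by simp
    then have "lam S \<noteq> 0" using A(2) by auto
    then have "ppoint S = ppoint G" using S c cnz ppoint_G by metis
    then show False using A(6) by simp
  qed
  then show "\<exists>\<sigma>. \<sigma> \<noteq> 0 \<and> S = csc \<sigma> (Wl u v) + csc (lam S) \<Gamma>" using \<sigma> by blast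
qed

lemma M_Jp: "Mset \<subseteq> Jp"
  unfolding Mset_def using inc0_facts(1) by auto

lemma inc0_Amb3: "incidence0 L \<subseteq> Amb3"
  unfolding incidence0_def Amb3_def using R_Sym by (auto simp: perp_def)

lemma Pol_inc0: "(S, G, (u, v)) \<in> incidence0 L \<Longrightarrow> Pol \<alpha> S u v = 0"
proof -
  assume a: "(S, G, (u, v)) \<in> incidence0 L"
  obtain \<sigma> where \<sigma>: "\<sigma> \<noteq> 0" "S = csc \<sigma> (Wl u v) + csc (lam S) \<Gamma>" using inc0_facts(9)[OF a] by blast
  show ?thesis using Pol_vanish[OF inc0_facts(2)[OF a] \<sigma>(2) \<sigma>(1) Wl_Sym[OF inc0_facts(5,6)[OF a]]] .
qed

lemma m3_pf: "(\<lambda>l. m3 (fst l) (snd l) X \<alpha> \<beta> \<gamma>) \<in> polyfuns pcoords"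
  unfolding m3_def m2_def ent_def
  by (intro pf_add pf_diff pf_mult pf_const pcoord1 pcoord2)

lemma m3t_pf: "(\<lambda>t. m3 (fst (snd (snd t))) (snd (snd (snd t))) (fst t) \<alpha> \<beta> \<gamma>) \<in> polyfuns tcoords"
  unfolding m3_def m2_def ent_def
  by (intro pf_add pf_diff pf_mult pf_const tcoord1 tcoord3 tcoord4)

lemma Jvar_Jp: "Jvar L \<subseteq> Jp"
proof
  fix l assume l: "l \<in> Jvar L"
  have lM: "l \<in> zclosure pcoords IndepPairs Mset" using l by (simp add: Jvar_def Mset_def)
  then have lI: "l \<in> IndepPairs" by (rule zclosure_in)
  have "m3 (fst l) (snd l) \<Gamma> \<alpha> \<beta> \<gamma> = 0" for \<alpha> \<beta> \<gamma>
  proof (rule zclosure_vanish[OF lM m3_pf])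
    fix l' assume "l' \<in> Mset"
    then have lJ: "l' \<in> Jp" using M_Jp by blast
    obtain x y where xy: "l' = (x, y)" by (cases l')
    have "indep2 x y" "on_line \<Gamma> (x, y)" using lJ xy by (auto simp: Jp_def IndepPairs_def)
    then have "\<forall>\<alpha> \<beta> \<gamma>. m3 x y \<Gamma> \<alpha> \<beta> \<gamma> = 0" using on_line_m3 by blast
    then have "m3 x y \<Gamma> \<alpha> \<beta> \<gamma> = 0" by blast
    then show "m3 (fst l') (snd l') \<Gamma> \<alpha> \<beta> \<gamma> = 0" unfolding xy fst_conv snd_conv .
  qed
  then have "on_line \<Gamma> (fst l, snd l)"
    using on_line_m3[of "fst l" "snd l" \<Gamma>] lI by (auto simp: IndepPairs_def)
  then show "l \<in> Jp" using lI by (simp add: Jp_def)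
qed


lemma inc_vanish:
  assumes T: "(S, G, (u, v)) \<in> incidence L" and g: "g \<in> polyfuns tcoords"
    and van: "\<And>S' G' u' v'. (S', G', (u', v')) \<in> incidence0 L \<Longrightarrow> g (S', G', (u', v')) = 0"
  shows "g (S, G, (u, v)) = 0"
proof (rule zclosure_vanish[OF T[unfolded incidence_def] g])
  fix a assume "a \<in> incidence0 L"
  then show "g a = 0" using van by (cases a) auto
qed

lemma inc_facts:
  assumes T: "(S, G, (u, v)) \<in> incidence L"
  shows "S \<in> reciprocal L" "S \<noteq> 0" "\<exists>c. c \<noteq> 0 \<and> G = csc c \<Gamma>" "(u, v) \<in> IndepPairs"
    "on_line S (u, v)" "\<And>\<alpha>. Pol \<alpha> S u v = 0"
proof -
  have A: "(S, G, (u, v)) \<in> Amb3" using T unfolding incidence_def by (rule zclosure_in)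
  then have A': "S \<in> Sym" "S \<noteq> 0" "G \<in> Sym" "G \<noteq> 0" "(u, v) \<in> IndepPairs" by (auto simp: Amb3_def)
  then show "S \<noteq> 0" "(u, v) \<in> IndepPairs" by auto
  show "S \<in> reciprocal L" unfolding R_def' zclosure_char
  proof (safe)
    show "S \<in> Sym" using A' by simp
    fix g :: "'n cmat \<Rightarrow> complex" assume g: "g \<in> polyfuns mcoords" "\<forall>a\<in>Inv. g a = 0"
    have "(\<lambda>t. g (fst t)) \<in> polyfuns tcoords" using g(1) by (rule pf_comp_m) (rule tcoord1)
    then have "(\<lambda>t. g (fst t)) (S, G, (u, v)) = 0"
    proof (rule inc_vanish[OF T])
      fix S' G' u' v' assume "(S', G', (u', v')) \<in> incidence0 L"
      then have "S' \<in> reciprocal L" by (rule inc0_facts(2))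
      then show "g (fst (S', G', (u', v'))) = 0" using g unfolding R_def' by (auto intro: zclosure_vanish)
    qed
    then show "g S = 0" by simp
  qed
  have "G \<in> perp L" unfolding perp_def
  proof (safe)
    show "G \<in> Sym" using A' by simp
    fix K assume K: "K \<in> L"
    have pf: "(\<lambda>t. tr2 K (fst (snd t))) \<in> polyfuns tcoords"
      unfolding tr2_def by (intro pf_sum pf_mult pf_const tcoord2) auto
    have "(\<lambda>t. tr2 K (fst (snd t))) (S, G, (u, v)) = 0"
    proof (rule inc_vanish[OF T pf])
      fix S' G' u' v' assume "(S', G', (u', v')) \<in> incidence0 L"
      then have "G' \<in> perp L" by (auto simp: incidence0_def)
      then show "tr2 K (fst (snd (S', G', (u', v')))) = 0" using K by (auto simp: perp_def trace_tr2)
    qed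
    then show "trace (K ** G) = 0" by (simp add: trace_tr2)
  qed
  then obtain c where "G = csc c \<Gamma>" using perp_iff by blast
  moreover have "c \<noteq> 0" using A'(4) calculation by auto
  ultimately show "\<exists>c. c \<noteq> 0 \<and> G = csc c \<Gamma>" by blast
  have "m3 u v S \<alpha> \<beta> \<gamma> = 0" for \<alpha> \<beta> \<gamma>
  proof -
    have "(\<lambda>t. m3 (fst (snd (snd t))) (snd (snd (snd t))) (fst t) \<alpha> \<beta> \<gamma>) (S, G, (u, v)) = 0"
    proof (rule inc_vanish[OF T m3t_pf])
      fix S' G' u' v' assume a: "(S', G', (u', v')) \<in> incidence0 L"
      have "\<forall>\<alpha> \<beta> \<gamma>. m3 u' v' S' \<alpha> \<beta> \<gamma> = 0"
        using on_line_m3[OF inc0_facts(7)[OF a]] inc0_facts(4)[OF a] by blast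
      then show "m3 (fst (snd (snd (S', G', (u', v'))))) (snd (snd (snd (S', G', (u', v'))))) (fst (S', G', (u', v'))) \<alpha> \<beta> \<gamma> = 0"
        unfolding fst_conv snd_conv by blast
    qed
    then show ?thesis by simp
  qed
  then show "on_line S (u, v)" using on_line_m3[of u v S] A'(5) by (auto simp: IndepPairs_def)
  fix \<alpha>
  have "(\<lambda>t. Pol \<alpha> (fst t) (fst (snd (snd t))) (snd (snd (snd t)))) (S, G, (u, v)) = 0"
  proof (rule inc_vanish[OF T Pol_pf])
    fix S' G' u' v' assume a: "(S', G', (u', v')) \<in> incidence0 L"
    show "Pol \<alpha> (fst (S', G', (u', v'))) (fst (snd (snd (S', G', (u', v'))))) (snd (snd (snd (S', G', (u', v'))))) = 0"
      unfolding fst_conv snd_conv by (rule Pol_inc0[OF a])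
  qed
  then show "Pol \<alpha> S u v = 0" by simp
qed

lemma Sint_mem: "X \<in> reciprocal L \<inter> {G + Y | G. G \<in> perp L} \<longleftrightarrow> X \<in> reciprocal L \<and> (\<exists>c. X = csc c \<Gamma> + Y)"
  using perp_iff by auto



lemma on_line_comb: "on_line A l \<Longrightarrow> on_line B l \<Longrightarrow> on_line (csc a A + csc b B) l"
proof -
  assume "on_line A l" "on_line B l"
  then obtain a1 b1 a2 b2 where "A = csc a1 (fst l) + csc b1 (snd l)" "B = csc a2 (fst l) + csc b2 (snd l)"
    unfolding on_line_def by blast
  then have "csc a A + csc b B = csc (a * a1 + b * a2) (fst l) + csc (a * b1 + b * b2) (snd l)"
    by (simp add: mat_eq_iff algebra_simps)
  then show ?thesis unfolding on_line_def by blast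
qed

lemma proj_G: "(csc a W + csc b \<Gamma>) + csc (- lam (csc a W + csc b \<Gamma>)) \<Gamma> = csc a W" if "lam W = 0"
  using that by (simp add: mat_eq_iff algebra_simps)

lemma inc0_from_Sint:
  assumes l: "(u, v) \<in> IndepPairs" "on_line \<Gamma> (u, v)" and XR: "X \<in> reciprocal L"
    and X: "X = csc c \<Gamma> + S0map (u, v)"
  shows "(X, \<Gamma>, (u, v)) \<in> incidence0 L"
proof -
  have uv: "u \<in> Sym" "v \<in> Sym" "indep2 u v" using l(1) by (auto simp: IndepPairs_def)
  have Wnz: "Wl u v \<noteq> 0" by (rule Wl_nz[OF uv(3) l(2)])
  have X': "X = csc 1 (Wl u v) + csc (c + lam u) \<Gamma>" using X by (simp add: S0map_def mat_eq_iff algebra_simps)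
  have np: "X \<noteq> csc a \<Gamma>" for a by (rule not_prop_G[OF X' lam_Wl Wnz]) simp
  have Xnz: "X \<noteq> 0" using np[of 0] by simp
  have pp: "ppoint X \<noteq> ppoint \<Gamma>"
  proof
    assume "ppoint X = ppoint \<Gamma>"
    then obtain k where "X = csc k \<Gamma>" using ppoint_eqD[of \<Gamma> X] Xnz by auto
    then show False using np by blast
  qed
  have Gp: "\<Gamma> \<in> perp L" using perp_iff[of \<Gamma>] by (metis csc_1)
  have Won: "on_line (Wl u v) (u, v)" unfolding Wl_def on_line_def by auto
  have Xon: "on_line X (u, v)" unfolding X' by (rule on_line_comb[OF Won l(2)])
  show ?thesis unfolding incidence0_def using XR Xnz Gp Gnz l(1) pp Xon l(2) by blast
qed

lemma M_mem:
  assumes l: "(u, v) \<in> IndepPairs" "on_line \<Gamma> (u, v)" and f0nz: "f0 (S0map (u, v)) \<noteq> 0"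
  shows "(u, v) \<in> Mset"
proof -
  have uv: "u \<in> Sym" "v \<in> Sym" "indep2 u v" using l(1) by (auto simp: IndepPairs_def)
  define S0 where "S0 = S0map (u, v)"
  have S0S: "S0 \<in> Sym" unfolding S0_def S0map_def using uv GSym by (simp add: Wl_Sym Sym_add Sym_csc)
  have cnt: "finite (reciprocal L \<inter> {G + S0 | G. G \<in> perp L}) \<and> card (reciprocal L \<inter> {G + S0 | G. G \<in> perp L}) = d"
    using f0_cnt[OF S0S] f0nz by (simp add: S0_def)
  then have "reciprocal L \<inter> {G + S0 | G. G \<in> perp L} \<noteq> {}" using dnz by auto
  then obtain X c where X: "X \<in> reciprocal L" "X = csc c \<Gamma> + S0" using Sint_mem by blast
  have "(X, \<Gamma>, (u, v)) \<in> incidence0 L" using inc0_from_Sint[OF l X(1)] X(2) S0_def by blast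
  then show ?thesis unfolding Mset_def by blast
qed

lemma fibre:
  assumes lJ: "(u, v) \<in> Jvar L" and hnz: "hfun (u, v) \<noteq> 0"
  shows "finite (gamma_fibre L (u, v)) \<and> card (gamma_fibre L (u, v)) = d"
proof -
  have lJp: "(u, v) \<in> Jp" using Jvar_Jp lJ by blast
  then have l: "(u, v) \<in> IndepPairs" "on_line \<Gamma> (u, v)" by (auto simp: Jp_def)
  have uv: "u \<in> Sym" "v \<in> Sym" "indep2 u v" using l(1) by (auto simp: IndepPairs_def)
  define Wv where "Wv = Wl u v"
  have Wnz: "Wv \<noteq> 0" unfolding Wv_def by (rule Wl_nz[OF uv(3) l(2)])
  have f0nz: "f0 (S0map (u, v)) \<noteq> 0" and atnz: "atc dd r Wv \<noteq> 0"
    using hnz by (auto simp: hfun_def Wv_def)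
  define S0 where "S0 = S0map (u, v)"
  have S0W: "S0 = Wv + csc (lam u) \<Gamma>" by (simp add: S0_def S0map_def Wv_def)
  have S0S: "S0 \<in> Sym" unfolding S0_def S0map_def using uv GSym by (simp add: Wl_Sym Sym_add Sym_csc)
  define Si where "Si = reciprocal L \<inter> {G + S0 | G. G \<in> perp L}"
  have cnt: "finite Si \<and> card Si = d"
    using f0_cnt[OF S0S] f0nz by (simp add: S0_def Si_def)
  define Fm where "Fm = (\<lambda>X::'n cmat. (ppoint X, ppoint \<Gamma>))"
  have sub1: "gamma_fibre L (u, v) \<subseteq> Fm ` Si"
  proof
    fix x assume "x \<in> gamma_fibre L (u, v)"
    then obtain S G where x: "x = (ppoint S, ppoint G)" and T: "(S, G, (u, v)) \<in> incidence L"
      unfolding gamma_fibre_def by blast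
    note F = inc_facts[OF T]
    obtain c where c: "c \<noteq> 0" "G = csc c \<Gamma>" using F(3) by blast
    obtain \<sigma> where \<sigma>: "S = csc \<sigma> Wv + csc (lam S) \<Gamma>" using span_decomp[OF uv(3) l(2) F(5)] Wv_def by blast
    have \<sigma>nz: "\<sigma> \<noteq> 0"
    proof
      assume "\<sigma> = 0"
      then have S: "S = csc (lam S) \<Gamma>" using \<sigma> by simp
      then have lnz: "lam S \<noteq> 0" using F(2) by auto
      obtain \<alpha> where \<alpha>: "ent Wv \<alpha> \<noteq> 0" using Wnz by (auto simp: mat_eq_ent)
      have "Pol \<alpha> S u v = ent Wv \<alpha> ^ (dd - r) * lam S ^ (dd - r) * atc dd r Wv"
        using Pol_G[of \<alpha> "lam S" u v] S Wv_def by metis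
      also have "\<dots> \<noteq> 0" using \<alpha> lnz atnz by simp
      finally show False using F(6) by simp
    qed
    define X where "X = csc (1 / \<sigma>) S"
    have XR: "X \<in> reciprocal L" unfolding X_def using R_cone[OF F(1)] \<sigma>nz by simp
    have "X = csc (lam S / \<sigma> - lam u) \<Gamma> + S0"
      unfolding X_def S0W using \<sigma>nz by (subst \<sigma>) (simp add: mat_eq_iff field_simps)
    then have "X \<in> Si" using XR Sint_mem Si_def by blast
    moreover have "x = Fm X"
      using x c \<sigma>nz by (simp add: Fm_def X_def ppoint_csc ppoint_G)
    ultimately show "x \<in> Fm ` Si" by blast
  qed
  have sub2: "Fm ` Si \<subseteq> gamma_fibre L (u, v)"
  proof
    fix x assume "x \<in> Fm ` Si"
    then obtain X where X: "X \<in> Si" "x = Fm X" by blast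
    then obtain c where "X \<in> reciprocal L" "X = csc c \<Gamma> + S0" using Sint_mem Si_def by blast
    then have "(X, \<Gamma>, (u, v)) \<in> incidence0 L" using inc0_from_Sint[OF l] S0_def by blast
    then have "(X, \<Gamma>, (u, v)) \<in> incidence L"
      unfolding incidence_def using zclosure_sub[OF inc0_Amb3] by blast
    then show "x \<in> gamma_fibre L (u, v)" unfolding gamma_fibre_def X(2) Fm_def by blast
  qed
  have inj: "inj_on Fm Si"
  proof (rule inj_onI)
    fix X1 X2 assume X1: "X1 \<in> Si" and X2: "X2 \<in> Si" and eq: "Fm X1 = Fm X2"
    obtain c1 where c1: "X1 = csc c1 \<Gamma> + S0" using X1 Sint_mem Si_def by blast
    obtain c2 where c2: "X2 = csc c2 \<Gamma> + S0" using X2 Sint_mem Si_def by blast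
    have X1': "X1 = csc 1 Wv + csc (c1 + lam u) \<Gamma>" using c1 S0W by (simp add: mat_eq_iff algebra_simps)
    have X2': "X2 = csc 1 Wv + csc (c2 + lam u) \<Gamma>" using c2 S0W by (simp add: mat_eq_iff algebra_simps)
    have lW: "lam Wv = 0" by (simp add: Wv_def)
    have "X2 \<noteq> csc 0 \<Gamma>" by (rule not_prop_G[OF X2' lW Wnz]) simp
    then have X2nz: "X2 \<noteq> 0" by simp
    have "ppoint X1 = ppoint X2" using eq by (simp add: Fm_def)
    then obtain k where k: "k \<noteq> 0" "X2 = csc k X1" using ppoint_eqD X2nz by blast
    have "X2 = csc k Wv + csc (k * (c1 + lam u)) \<Gamma>" using k(2) X1' by (simp add: mat_eq_iff algebra_simps)
    then have "csc 1 Wv = csc k Wv" using proj_G[OF lW, of 1 "c2 + lam u"] proj_G[OF lW, of k "k * (c1 + lam u)"] X2'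
      by metis
    then have "csc (1 - k) Wv = 0" by (simp add: mat_eq_iff algebra_simps)
    then have "k = 1" using Wnz by (auto simp: mat_eq_iff)
    then show "X1 = X2" using k by simp
  qed
  have "gamma_fibre L (u, v) = Fm ` Si" using sub1 sub2 by blast
  then show ?thesis using cnt inj by (simp add: card_image)
qed


definition symm :: "'n cmat \<Rightarrow> 'n cmat" where
  "symm W = csc (1/2) (W + transpose W)"

lemma symm_entry: "symm W $ i $ j = (W $ i $ j + W $ j $ i) / 2"
  by (simp add: symm_def transpose_def)

lemma symm_Sym: "symm W \<in> Sym" by (simp add: Sym_iff symm_entry add.commute)
lemma symm_id: "W \<in> Sym \<Longrightarrow> symm W = W" by (simp add: mat_eq_iff symm_entry Sym_iff)

definition Th :: "'n cmat \<times> complex \<times> complex \<times> complex \<times> complex \<Rightarrow> 'n cmat \<times> 'n cmat" where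
  "Th x = (case x of (W, a, b, c, e) \<Rightarrow> (csc a (symm W) + csc b \<Gamma>, csc c (symm W) + csc e \<Gamma>))"

fun Lnp :: "'n cmat \<times> complex \<times> complex \<times> complex \<times> complex \<Rightarrow> 'n cmat \<times> complex \<times> complex \<times> complex \<times> complex
    \<Rightarrow> complex \<Rightarrow> 'n cmat \<times> complex \<times> complex \<times> complex \<times> complex" where
  "Lnp (W1, a1, b1, c1, e1) (W2, a2, b2, c2, e2) z =
     (W1 + csc z (W2 - W1), a1 + z * (a2 - a1), b1 + z * (b2 - b1), c1 + z * (c2 - c1), e1 + z * (e2 - e1))"

lemma Lnp0: "Lnp x y 0 = x"
  by (cases x; cases y) (simp add: mat_eq_iff)

lemma Lnp1: "Lnp x y 1 = y"
  by (cases x; cases y) (simp add: mat_eq_iff)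

lemma Th_linepoly:
  assumes g: "g \<in> polyfuns pcoords"
  shows "\<exists>P. \<forall>z. g (Th (Lnp x y z)) = poly P z"
proof (rule pf_linepoly[OF g])
  fix c :: "'n cmat \<times> 'n cmat \<Rightarrow> complex" assume "c \<in> pcoords"
  then consider (u) i j where "c = (\<lambda>(u, v). u $ i $ j)" | (v) i j where "c = (\<lambda>(u, v). v $ i $ j)"
    unfolding pcoords_def by blast
  note cs = this
  obtain W1 a1 b1 c1 e1 where x: "x = (W1, a1, b1, c1, e1)" by (cases x) auto
  obtain W2 a2 b2 c2 e2 where y: "y = (W2, a2, b2, c2, e2)" by (cases y) auto
  have se: "symm (W1 + csc z (W2 - W1)) $ i $ j = symm W1 $ i $ j + z * (symm W2 $ i $ j - symm W1 $ i $ j)" for z i j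
    by (simp add: symm_entry algebra_simps add_divide_distrib diff_divide_distrib)
  show "\<exists>P. \<forall>z. c (Th (Lnp x y z)) = poly P z"
    using cs
  proof cases
    case (u i j)
    show ?thesis
      by (rule exI[of _ "[:a1, a2 - a1:] * [:symm W1 $ i $ j, symm W2 $ i $ j - symm W1 $ i $ j:] + [:b1, b2 - b1:] * [:\<Gamma> $ i $ j:]"])
         (simp add: u x y Th_def se algebra_simps)
  next
    case (v i j)
    show ?thesis
      by (rule exI[of _ "[:c1, c2 - c1:] * [:symm W1 $ i $ j, symm W2 $ i $ j - symm W1 $ i $ j:] + [:e1, e2 - e1:] * [:\<Gamma> $ i $ j:]"])
         (simp add: v x y Th_def se algebra_simps)
  qed
qed

lemma dom_Th:
  assumes "g1 \<in> polyfuns pcoords" "g2 \<in> polyfuns pcoords" "g1 (Th x) \<noteq> 0" "g2 (Th y) \<noteq> 0"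
  shows "\<exists>z. g1 (Th z) * g2 (Th z) \<noteq> 0"
proof -
  have "\<exists>z. g1 (Th (Lnp x y z)) * g2 (Th (Lnp x y z)) \<noteq> 0"
    by (rule domain_lemma[where a = 0 and b = 1]) (use assms Th_linepoly Lnp0 Lnp1 in auto)
  then show ?thesis by blast
qed

lemma Th_base: "W \<in> Sym \<Longrightarrow> Th (W, 1, 0, 0, 1) = (W, \<Gamma>)"
  by (simp add: Th_def symm_id)

definition iota :: "'n cmat \<times> 'n cmat \<Rightarrow> complex" where
  "iota l = m2 (fst l) (snd l) (p, q) (i0, i0)"

lemma iota_pf: "iota \<in> polyfuns pcoords"
proof -
  have "(\<lambda>l. m2 (fst l) (snd l) (p, q) (i0, i0)) \<in> polyfuns pcoords"
    unfolding m2_def ent_def by (intro pf_diff pf_mult pcoord1 pcoord2)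
  then show ?thesis by (simp add: iota_def[abs_def])
qed

lemma iota_base: "iota (Th (Bm i0 i0, 1, 0, 0, 1)) \<noteq> 0"
proof -
  have "Th (Bm i0 i0, 1, 0, 0, 1) = (Bm i0 i0, \<Gamma>)" by (rule Th_base[OF Bm_Sym])
  moreover have "Bm i0 i0 $ p $ q = 0" "Bm i0 i0 $ i0 $ i0 = 1" using i0 by (auto simp: Bm_def)
  ultimately show ?thesis using Gpq by (simp add: iota_def m2_def ent_def)
qed

lemma Th_Jp:
  assumes "iota (Th x) \<noteq> 0"
  shows "Th x \<in> Jp"
proof -
  obtain W a b c e where x: "x = (W, a, b, c, e)" by (cases x) auto
  define u where "u = csc a (symm W) + csc b \<Gamma>"
  define v where "v = csc c (symm W) + csc e \<Gamma>"
  have Thx: "Th x = (u, v)" by (simp add: x Th_def u_def v_def)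
  have ind: "indep2 u v" using assms Thx m2_indep by (auto simp: iota_def)
  have uvS: "u \<in> Sym" "v \<in> Sym" unfolding u_def v_def using GSym symm_Sym by (auto intro!: Sym_add Sym_csc)
  have key: "csc c u + csc (- a) v = csc (c * b - a * e) \<Gamma>"
    by (simp add: u_def v_def mat_eq_iff algebra_simps)
  have nz: "c * b - a * e \<noteq> 0"
  proof
    assume z: "c * b - a * e = 0"
    then have "csc c u + csc (- a) v = 0" using key by simp
    then have ca: "c = 0 \<and> - a = 0" using ind unfolding indep2_def by blast
    then have "csc e u + csc (- b) v = 0" by (simp add: u_def v_def mat_eq_iff algebra_simps)
    then have "e = 0 \<and> - b = 0" using ind unfolding indep2_def by blast
    then have "u = 0" using ca by (simp add: u_def)
    then have "csc 1 u + csc 0 v = 0" by simp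
    then show False using ind unfolding indep2_def by fastforce
  qed
  have "\<Gamma> = csc (c / (c * b - a * e)) u + csc (- a / (c * b - a * e)) v"
  proof -
    have "csc (1 / (c * b - a * e)) (csc c u + csc (- a) v) = \<Gamma>" using key nz by simp
    then show ?thesis by (simp add: csc_add)
  qed
  then have "on_line \<Gamma> (u, v)" unfolding on_line_def by auto
  then show ?thesis using ind uvS Thx by (simp add: Jp_def IndepPairs_def)
qed

lemma Th_onto:
  assumes "l \<in> Jp" shows "\<exists>x. Th x = l"
proof -
  obtain u v where l: "l = (u, v)" by (cases l)
  have uv: "u \<in> Sym" "v \<in> Sym" and Gon: "on_line \<Gamma> (u, v)" using assms l by (auto simp: Jp_def IndepPairs_def)
  then obtain \<alpha> \<beta> where G: "\<Gamma> = csc \<alpha> u + csc \<beta> v" by (auto simp: on_line_def)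
  have ind: "indep2 u v" using assms l by (auto simp: Jp_def IndepPairs_def)
  show ?thesis
  proof (cases "\<alpha> = 0")
    case False
    have "u = csc (- \<beta> / \<alpha>) v + csc (1 / \<alpha>) \<Gamma>"
      using False by (simp add: G mat_eq_iff field_simps)
    then have "Th (v, - \<beta> / \<alpha>, 1 / \<alpha>, 1, 0) = (u, v)" using uv by (simp add: Th_def symm_id)
    then show ?thesis using l by blast
  next
    case True
    then have bnz: "\<beta> \<noteq> 0" using G Gnz by auto
    have "v = csc 0 u + csc (1 / \<beta>) \<Gamma>"
      using True bnz by (simp add: G mat_eq_iff field_simps)
    then have "Th (u, 1, 0, 0, 1 / \<beta>) = (u, v)" using uv by (simp add: Th_def symm_id)
    then show ?thesis using l by blast
  qed
qed


lemma S0map_pf: "(\<lambda>l. S0map l $ i $ j) \<in> polyfuns pcoords"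
proof -
  have W: "(\<lambda>l. Wl (fst l) (snd l) $ i $ j) \<in> polyfuns pcoords"
    by (rule Wl_pf) (rule pcoord1, rule pcoord2)
  have "(\<lambda>l. Wl (fst l) (snd l) $ i $ j + lam (fst l) * \<Gamma> $ i $ j) \<in> polyfuns pcoords"
    by (intro pf_add pf_mult pf_const W lam_pf pcoord1)
  then show ?thesis by (simp add: S0map_def)
qed

lemma f0S_pf: "(\<lambda>l. f0 (S0map l)) \<in> polyfuns pcoords"
  using f0_pf by (rule pf_comp_m) (rule S0map_pf)

lemma atW_pf: "(\<lambda>l. atc dd r (Wl (fst l) (snd l))) \<in> polyfuns pcoords"
  using atc_pf by (rule pf_comp_m) (rule Wl_pf, rule pcoord1, rule pcoord2)

lemma hfun_pf: "hfun \<in> polyfuns pcoords"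
proof -
  have "(\<lambda>l. f0 (S0map l) * atc dd r (Wl (fst l) (snd l))) \<in> polyfuns pcoords"
    by (rule pf_mult[OF f0S_pf atW_pf])
  then show ?thesis by (simp add: hfun_def[abs_def])
qed

lemma S0map_base: "W \<in> Sym \<Longrightarrow> S0map (W, \<Gamma>) = W"
  by (simp add: S0map_def Wl_def mat_eq_iff)

lemma atW_base: "atc dd r (Wl W \<Gamma>) = atc dd r W"
proof -
  have "Wl W \<Gamma> = W + csc (- lam W) \<Gamma>" by (simp add: Wl_def)
  moreover have "lam (Wl W \<Gamma>) = 0" by simp
  ultimately show ?thesis by (simp add: atc_def)
qed

lemma Jp_Jvar: "Jp \<subseteq> Jvar L"
proof
  fix l assume lJ: "l \<in> Jp"
  have JM: "Jvar L = zclosure pcoords IndepPairs Mset" by (simp add: Jvar_def Mset_def)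
  show "l \<in> Jvar L" unfolding JM zclosure_char
  proof (safe)
    show "l \<in> IndepPairs" using lJ by (simp add: Jp_def)
    fix g assume g: "g \<in> polyfuns pcoords" "\<forall>a\<in>Mset. g a = 0"
    show "g l = 0"
    proof (rule ccontr)
      assume gl: "g l \<noteq> 0"
      obtain x1 where x1: "Th x1 = l" using Th_onto[OF lJ] by blast
      obtain z where z: "iota (Th z) * f0 (S0map (Th z)) \<noteq> 0"
        using dom_Th[OF iota_pf f0S_pf iota_base, of "(W0, 1, 0, 0, 1)"] Th_base[OF W0(1)] S0map_base[OF W0(1)] W0(2)
        by auto
      have g2: "(\<lambda>l. iota l * f0 (S0map l)) \<in> polyfuns pcoords" by (rule pf_mult[OF iota_pf f0S_pf])
      obtain z' where z': "g (Th z') * (iota (Th z') * f0 (S0map (Th z'))) \<noteq> 0"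
        using dom_Th[OF g(1) g2, of x1 z] gl x1 z by auto
      then have "Th z' \<in> Jp" using Th_Jp by auto
      moreover obtain u v where uv: "Th z' = (u, v)" by (cases "Th z'")
      ultimately have "(u, v) \<in> Mset" using M_mem z' by (auto simp: Jp_def)
      then have "g (Th z') = 0" using g(2) uv by simp
      then show False using z' by simp
    qed
  qed
qed

definition Uset :: "('n cmat \<times> 'n cmat) set" where
  "Uset = Jvar L - {l. hfun l = 0}"

lemma U_open: "zopen_in pcoords (Jvar L) Uset"
proof -
  have "zclosed pcoords {l. \<forall>h\<in>{hfun}. h l = 0}" by (rule zclosed_V) (simp add: hfun_pf)
  then show ?thesis unfolding zopen_in_def Uset_def by auto
qed

lemma U_dense: "zclosure pcoords IndepPairs Uset = Jvar L"
proof (intro equalityI subsetI)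
  fix x assume x: "x \<in> zclosure pcoords IndepPairs Uset"
  have JM: "Jvar L = zclosure pcoords IndepPairs Mset" by (simp add: Jvar_def Mset_def)
  show "x \<in> Jvar L" unfolding JM zclosure_char
  proof (safe)
    show "x \<in> IndepPairs" using x by (rule zclosure_in)
    fix g assume g: "g \<in> polyfuns pcoords" "\<forall>a\<in>Mset. g a = 0"
    have "\<forall>a\<in>Uset. g a = 0"
    proof
      fix a assume "a \<in> Uset"
      then have "a \<in> zclosure pcoords IndepPairs Mset" using JM by (simp add: Uset_def)
      then show "g a = 0" using g by (auto intro: zclosure_vanish)
    qed
    then show "g x = 0" using x g(1) by (auto intro: zclosure_vanish)
  qed
next
  fix l assume lJ: "l \<in> Jvar L"
  show "l \<in> zclosure pcoords IndepPairs Uset" unfolding zclosure_char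
  proof (safe)
    show "l \<in> IndepPairs" using lJ by (simp add: Jvar_def zclosure_in)
    fix g assume g: "g \<in> polyfuns pcoords" "\<forall>a\<in>Uset. g a = 0"
    show "g l = 0"
    proof (rule ccontr)
      assume gl: "g l \<noteq> 0"
      have lJp: "l \<in> Jp" using Jvar_Jp lJ by blast
      obtain x1 where x1: "Th x1 = l" using Th_onto[OF lJp] by blast
      obtain W1 where W1: "W1 \<in> Sym" "atc dd r W1 \<noteq> 0" using r_ex by blast
      obtain z1 where z1: "f0 (S0map (Th z1)) * atc dd r (Wl (fst (Th z1)) (snd (Th z1))) \<noteq> 0"
        using dom_Th[OF f0S_pf atW_pf, of "(W0, 1, 0, 0, 1)" "(W1, 1, 0, 0, 1)"]
          Th_base[OF W0(1)] S0map_base[OF W0(1)] W0(2) Th_base[OF W1(1)] atW_base W1(2)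
        by auto
      then have z1': "hfun (Th z1) \<noteq> 0" by (simp add: hfun_def)
      obtain z2 where z2: "iota (Th z2) * hfun (Th z2) \<noteq> 0"
        using dom_Th[OF iota_pf hfun_pf iota_base z1'] by blast
      have g2: "(\<lambda>l. iota l * hfun l) \<in> polyfuns pcoords" by (rule pf_mult[OF iota_pf hfun_pf])
      obtain z' where z': "g (Th z') * (iota (Th z') * hfun (Th z')) \<noteq> 0"
        using dom_Th[OF g(1) g2, of x1 z2] gl x1 z2 by auto
      then have "Th z' \<in> Jp" using Th_Jp by auto
      then have "Th z' \<in> Jvar L" using Jp_Jvar by blast
      then have "Th z' \<in> Uset" using z' by (simp add: Uset_def)
      then have "g (Th z') = 0" using g(2) by blast
      then show False using z' by simp
    qed
  qed
qed

lemma gamma_deg: "gamma_degree L d"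
  unfolding gamma_degree_def
proof (intro exI[of _ Uset] conjI ballI)
  show "zopen_in pcoords (Jvar L) Uset" by (rule U_open)
  show "zclosure pcoords IndepPairs Uset = Jvar L" by (rule U_dense)
  fix l assume l: "l \<in> Uset"
  obtain u v where uv: "l = (u, v)" by (cases l)
  have "(u, v) \<in> Jvar L" "hfun (u, v) \<noteq> 0" using l uv by (auto simp: Uset_def)
  then have "finite (gamma_fibre L (u, v)) \<and> card (gamma_fibre L (u, v)) = d" by (rule fibre)
  then show "finite (gamma_fibre L l)" "card (gamma_fibre L l) = d" using uv by auto
qed

end


theorem proposition3p1:
  fixes L :: "'n::finite cmat set" and d :: nat
  assumes "is_hyperplane L" and "regular L"
    and "ml_degree L d" and "d \<noteq> 0"
  shows "gamma_degree L d"
proof -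
  obtain \<Gamma> where G: "\<Gamma> \<in> Sym" "\<Gamma> \<noteq> 0" "L = {K\<in>Sym. tr2 K \<Gamma> = 0}" "perp L = {csc c \<Gamma> | c. True}"
    using hyperplane_Gamma[OF assms(1)] by blast
  obtain p q where pq: "\<Gamma> $ p $ q \<noteq> 0" using G(2) by (auto simp: mat_eq_iff)
  interpret hsetup L \<Gamma> p q using G pq by unfold_locales auto
  obtain U0 where U0: "zopen_in mcoords Sym U0" "U0 \<noteq> {}"
    "\<And>S. S \<in> U0 \<Longrightarrow> finite (reciprocal L \<inter> {G + S | G. G \<in> perp L}) \<and> card (reciprocal L \<inter> {G + S | G. G \<in> perp L}) = d"
    using assms(3) unfolding ml_degree_def by blast
  obtain C where C: "zclosed mcoords C" "U0 = Sym - C" using U0(1) unfolding zopen_in_def by blast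
  obtain F where F: "F \<subseteq> polyfuns mcoords" "C = {x. \<forall>f\<in>F. f x = 0}" using C(1) unfolding zclosed_def by blast
  obtain W0 where W0U: "W0 \<in> U0" using U0(2) by blast
  then have W0S: "W0 \<in> Sym" and "W0 \<notin> C" using C(2) by auto
  then obtain f0 where f0: "f0 \<in> F" "f0 W0 \<noteq> 0" using F(2) by auto
  have f0_cnt: "finite (reciprocal L \<inter> {G + X | G. G \<in> perp L}) \<and> card (reciprocal L \<inter> {G + X | G. G \<in> perp L}) = d"
    if "X \<in> Sym" "f0 X \<noteq> 0" for X
  proof -
    have "X \<in> U0" using that f0(1) F(2) C(2) by auto
    then show ?thesis by (rule U0(3))
  qed
  obtain i0 where i0: "i0 \<noteq> p"
  proof (rule ccontr)
    assume "\<not> thesis"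
    then have all: "\<And>i. i = p" using that by blast
    obtain K where K: "K \<in> L" "det K \<noteq> 0" using assms(2) unfolding regular_def by blast
    have U: "(UNIV :: 'n set) = {p}" using all by auto
    have "tr2 K \<Gamma> = 0" using K(1) G(3) by simp
    moreover have "tr2 K \<Gamma> = K $ p $ p * \<Gamma> $ p $ p" by (simp add: tr2_def U)
    moreover have "\<Gamma> $ p $ p \<noteq> 0" using pq all[of q] by simp
    ultimately have "K $ p $ p = 0" by simp
    then have "K = 0" using all by (simp add: mat_eq_iff) (metis all)
    then have "row p K = 0" by (simp add: row_def vec_eq_iff)
    then have "det K = 0" by (rule det_zero_row(2))
    then show False using K(2) by simp
  qed
  have "\<exists>X0. X0 \<in> Sym \<and> X0 \<notin> reciprocal L"
  proof (rule ccontr)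
    assume "\<not> ?thesis"
    then have SR: "\<And>X. X \<in> Sym \<Longrightarrow> X \<in> reciprocal L" by blast
    have fin: "finite (reciprocal L \<inter> {G + W0 | G. G \<in> perp L})" using U0(3)[OF W0U] by blast
    have "range (\<lambda>c. csc c \<Gamma> + W0) \<subseteq> reciprocal L \<inter> {G + W0 | G. G \<in> perp L}"
      using SR W0S GSym perp_iff by (auto intro!: Sym_add Sym_csc)
    then have "finite (range (\<lambda>c. csc c \<Gamma> + W0))" using fin finite_subset by blast
    moreover have "inj (\<lambda>c. csc c \<Gamma> + W0)"
    proof (rule injI)
      fix c c' assume "csc c \<Gamma> + W0 = csc c' \<Gamma> + W0"
      then have "(csc c \<Gamma> + W0) $ p $ q = (csc c' \<Gamma> + W0) $ p $ q" by simp
      then show "c = c'" using pq by simp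
    qed
    ultimately have "finite (UNIV :: complex set)" using finite_imageD by blast
    then show False by (simp add: infinite_UNIV_char_0)
  qed
  then obtain X0 where X0: "X0 \<in> Sym" "X0 \<notin> reciprocal L" by blast
  then obtain f where f: "f \<in> polyfuns mcoords" "\<forall>a\<in>Inv. f a = 0" "f X0 \<noteq> 0"
    unfolding R_def' zclosure_char by blast
  have fR: "f X = 0" if "X \<in> reciprocal L" for X
    using that f(1,2) unfolding R_def' by (auto intro: zclosure_vanish)
  obtain D e where De: "\<forall>k j. e k j \<in> polyfuns mcoords" "\<forall>k j W. (D < k \<or> D < j) \<longrightarrow> e k j W = 0"
     "\<forall>W \<sigma> \<tau>. f (csc \<sigma> W + csc \<tau> \<Gamma>) = (\<Sum>k\<le>D. \<Sum>j\<le>D. e k j W * \<sigma> ^ k * \<tau> ^ j)"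
    using expand2[OF f(1), of \<Gamma>] by blast
  interpret hmain L \<Gamma> p q d f0 W0 i0 f X0 D e
    by unfold_locales (use assms(4) f0 F(1) f0_cnt W0S i0 f fR X0 De in auto)
  show ?thesis by (rule gamma_deg)
qed

end
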